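(* Let $(\mathcal C,\otimes,\mathbb 1,c)$ be a symmetric monoidal category and $(H,m,u,\underline\Delta,\underline\varepsilon,S,S^{-1},\Lambda,\lambda)$ an integral Hopf algebra in $\mathcal C$. If there is a morphism $\theta:\mathbb 1\to H$ with $m(\theta\otimes\theta)=u\,\underline\varepsilon\,\Lambda$, then the Frobenius algebra $(H,m,u,\Delta,\varepsilon)$ with $\Delta=(m\otimes S)(\mathrm{id}_H\otimes\underline\Delta\Lambda)$ and $\varepsilon=\lambda$ is extendable, with extended structure $\phi=\mathrm{id}_H$ and this $\theta$. In particular, when $\mathcal C$ is the category of vector spaces over an algebraically closed field $\Bbbk$ of characteristic zero, this Frobenius algebra is extendable with $\phi=\mathrm{id}_H$ and $\theta=\pm\sqrt{\underline\varepsilon(\Lambda(1_\Bbbk))}\;u(1_\Bbbk)$.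
   Context: Monoidal categories are taken strict. A Hopf algebra in symmetric monoidal $\mathcal C$ is $(H,m,u,\underline\Delta,\underline\varepsilon,S)$: an associative unital algebra and coassociative counital coalgebra with $\underline\Delta,\underline\varepsilon$ algebra morphisms and $m(S\otimes\mathrm{id})\underline\Delta=u\underline\varepsilon=m(\mathrm{id}\otimes S)\underline\Delta$. A left integral is $\Lambda:\mathbb 1\to H$ with $m(\mathrm{id}\otimes\Lambda)=\Lambda\underline\varepsilon$; a right cointegral is $\lambda:H\to\mathbb 1$ with $(\lambda\otimes\mathrm{id})\underline\Delta=u\lambda$; normalized means $\lambda\Lambda=\mathrm{id}_{\mathbb 1}$. An integral Hopf algebra has invertible antipode and a normalized pair $(\Lambda,\lambda)$. A Frobenius algebra is $(A,m,u,\Delta,\varepsilon)$ with $(m\otimes\mathrm{id})(\mathrm{id}\otimes\Delta)=\Delta m=(\mathrm{id}\otimes m)(\Delta\otimes\mathrm{id})$. An extended structure is $(\phi,\theta)$ with (i) $\phi$ a Frobenius algebra morphism, $\phi^2=\mathrm{id}$; (ii) $\phi m(\theta\otimes\mathrm{id})=m(\theta\otimes\mathrm{id})$; (iii) $m(\phi\otimes\mathrm{id})\Delta u=m(\theta\otimes\theta)$; extendable means such a pair exists. *)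

theory Defs
  imports Main
begin

text \<open>A strict symmetric monoidal category, presented by its data:
  objects, hom-sets, composition (Cmp g f = g after f), identities,
  tensor on objects and morphisms, unit object, symmetry.\<close>

record ('o, 'm) smcat =
  Obj :: "'o set"
  Hom :: "'o \<Rightarrow> 'o \<Rightarrow> 'm set"
  Cmp :: "'m \<Rightarrow> 'm \<Rightarrow> 'm"
  Idm :: "'o \<Rightarrow> 'm"
  Tob :: "'o \<Rightarrow> 'o \<Rightarrow> 'o"
  Tm  :: "'m \<Rightarrow> 'm \<Rightarrow> 'm"
  Uob  :: "'o"
  Sy  :: "'o \<Rightarrow> 'o \<Rightarrow> 'm"

definition strict_symmetric_monoidal_cat :: "('o, 'm) smcat \<Rightarrow> bool" where
  "strict_symmetric_monoidal_cat C \<longleftrightarrow>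
     
     (\<forall>A B f. f \<in> Hom C A B \<longrightarrow> A \<in> Obj C \<and> B \<in> Obj C) \<and>
     (\<forall>A\<in>Obj C. Idm C A \<in> Hom C A A) \<and>
     (\<forall>A B D f g. f \<in> Hom C A B \<longrightarrow> g \<in> Hom C B D \<longrightarrow> Cmp C g f \<in> Hom C A D) \<and>
     (\<forall>A B f. f \<in> Hom C A B \<longrightarrow> Cmp C (Idm C B) f = f \<and> Cmp C f (Idm C A) = f) \<and>
     (\<forall>A B D E f g h. f \<in> Hom C A B \<longrightarrow> g \<in> Hom C B D \<longrightarrow> h \<in> Hom C D E \<longrightarrow>
        Cmp C h (Cmp C g f) = Cmp C (Cmp C h g) f) \<and>
     
     Uob C \<in> Obj C \<and>
     (\<forall>A\<in>Obj C. \<forall>B\<in>Obj C. Tob C A B \<in> Obj C) \<and>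
     (\<forall>A B D E f g. f \<in> Hom C A B \<longrightarrow> g \<in> Hom C D E \<longrightarrow>
        Tm C f g \<in> Hom C (Tob C A D) (Tob C B E)) \<and>
     (\<forall>A\<in>Obj C. \<forall>B\<in>Obj C. Tm C (Idm C A) (Idm C B) = Idm C (Tob C A B)) \<and>
     (\<forall>A B D A' B' D' f g f' g'. f \<in> Hom C A B \<longrightarrow> g \<in> Hom C B D \<longrightarrow>
        f' \<in> Hom C A' B' \<longrightarrow> g' \<in> Hom C B' D' \<longrightarrow>
        Tm C (Cmp C g f) (Cmp C g' f') = Cmp C (Tm C g g') (Tm C f f')) \<and>
     
     (\<forall>A\<in>Obj C. \<forall>B\<in>Obj C. \<forall>D\<in>Obj C. Tob C (Tob C A B) D = Tob C A (Tob C B D)) \<and>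
     (\<forall>A B D E F G f g h. f \<in> Hom C A B \<longrightarrow> g \<in> Hom C D E \<longrightarrow> h \<in> Hom C F G \<longrightarrow>
        Tm C (Tm C f g) h = Tm C f (Tm C g h)) \<and>
     (\<forall>A\<in>Obj C. Tob C (Uob C) A = A \<and> Tob C A (Uob C) = A) \<and>
     (\<forall>A B f. f \<in> Hom C A B \<longrightarrow> Tm C (Idm C (Uob C)) f = f \<and> Tm C f (Idm C (Uob C)) = f) \<and>
     
     (\<forall>A\<in>Obj C. \<forall>B\<in>Obj C. Sy C A B \<in> Hom C (Tob C A B) (Tob C B A)) \<and>
     (\<forall>A B D E f g. f \<in> Hom C A B \<longrightarrow> g \<in> Hom C D E \<longrightarrow>
        Cmp C (Sy C B E) (Tm C f g) = Cmp C (Tm C g f) (Sy C A D)) \<and>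
     (\<forall>A\<in>Obj C. \<forall>B\<in>Obj C. Cmp C (Sy C B A) (Sy C A B) = Idm C (Tob C A B)) \<and>
     (\<forall>A\<in>Obj C. \<forall>B\<in>Obj C. \<forall>D\<in>Obj C.
        Sy C A (Tob C B D) = Cmp C (Tm C (Idm C B) (Sy C A D)) (Tm C (Sy C A B) (Idm C D)))"

definition algebra_in :: "('o, 'm) smcat \<Rightarrow> 'o \<Rightarrow> 'm \<Rightarrow> 'm \<Rightarrow> bool" where
  "algebra_in C H m u \<longleftrightarrow>
     H \<in> Obj C \<and> m \<in> Hom C (Tob C H H) H \<and> u \<in> Hom C (Uob C) H \<and>
     Cmp C m (Tm C m (Idm C H)) = Cmp C m (Tm C (Idm C H) m) \<and>
     Cmp C m (Tm C u (Idm C H)) = Idm C H \<and>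
     Cmp C m (Tm C (Idm C H) u) = Idm C H"

definition coalgebra_in :: "('o, 'm) smcat \<Rightarrow> 'o \<Rightarrow> 'm \<Rightarrow> 'm \<Rightarrow> bool" where
  "coalgebra_in C H d e \<longleftrightarrow>
     H \<in> Obj C \<and> d \<in> Hom C H (Tob C H H) \<and> e \<in> Hom C H (Uob C) \<and>
     Cmp C (Tm C d (Idm C H)) d = Cmp C (Tm C (Idm C H) d) d \<and>
     Cmp C (Tm C e (Idm C H)) d = Idm C H \<and>
     Cmp C (Tm C (Idm C H) e) d = Idm C H"

definition hopf_algebra_in ::
  "('o, 'm) smcat \<Rightarrow> 'o \<Rightarrow> 'm \<Rightarrow> 'm \<Rightarrow> 'm \<Rightarrow> 'm \<Rightarrow> 'm \<Rightarrow> bool" where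
  "hopf_algebra_in C H m u d e S \<longleftrightarrow>
     algebra_in C H m u \<and> coalgebra_in C H d e \<and>
     
     Cmp C d m = Cmp C (Tm C m m)
        (Cmp C (Tm C (Idm C H) (Tm C (Sy C H H) (Idm C H))) (Tm C d d)) \<and>
     Cmp C d u = Tm C u u \<and>
     
     Cmp C e m = Tm C e e \<and>
     Cmp C e u = Idm C (Uob C) \<and>
     
     S \<in> Hom C H H \<and>
     Cmp C m (Cmp C (Tm C S (Idm C H)) d) = Cmp C u e \<and>
     Cmp C m (Cmp C (Tm C (Idm C H) S) d) = Cmp C u e"

definition left_integral :: "('o, 'm) smcat \<Rightarrow> 'o \<Rightarrow> 'm \<Rightarrow> 'm \<Rightarrow> 'm \<Rightarrow> bool" where
  "left_integral C H m e \<Lambda> \<longleftrightarrow>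
     \<Lambda> \<in> Hom C (Uob C) H \<and> Cmp C m (Tm C (Idm C H) \<Lambda>) = Cmp C \<Lambda> e"

definition right_cointegral :: "('o, 'm) smcat \<Rightarrow> 'o \<Rightarrow> 'm \<Rightarrow> 'm \<Rightarrow> 'm \<Rightarrow> bool" where
  "right_cointegral C H u d lam \<longleftrightarrow>
     lam \<in> Hom C H (Uob C) \<and> Cmp C (Tm C lam (Idm C H)) d = Cmp C u lam"

definition integral_hopf_algebra_in ::
  "('o, 'm) smcat \<Rightarrow> 'o \<Rightarrow> 'm \<Rightarrow> 'm \<Rightarrow> 'm \<Rightarrow> 'm \<Rightarrow> 'm \<Rightarrow> 'm \<Rightarrow> 'm \<Rightarrow> 'm \<Rightarrow> bool" where
  "integral_hopf_algebra_in C H m u d e S Sinv \<Lambda> lam \<longleftrightarrow>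
     hopf_algebra_in C H m u d e S \<and>
     Sinv \<in> Hom C H H \<and> Cmp C S Sinv = Idm C H \<and> Cmp C Sinv S = Idm C H \<and>
     left_integral C H m e \<Lambda> \<and> right_cointegral C H u d lam \<and>
     Cmp C lam \<Lambda> = Idm C (Uob C)"

definition frobenius_algebra_in ::
  "('o, 'm) smcat \<Rightarrow> 'o \<Rightarrow> 'm \<Rightarrow> 'm \<Rightarrow> 'm \<Rightarrow> 'm \<Rightarrow> bool" where
  "frobenius_algebra_in C A m u d e \<longleftrightarrow>
     algebra_in C A m u \<and> coalgebra_in C A d e \<and>
     Cmp C (Tm C m (Idm C A)) (Tm C (Idm C A) d) = Cmp C d m \<and>
     Cmp C (Tm C (Idm C A) m) (Tm C d (Idm C A)) = Cmp C d m"

definition frobenius_morphism_in ::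
  "('o, 'm) smcat \<Rightarrow> 'o \<Rightarrow> 'm \<Rightarrow> 'm \<Rightarrow> 'm \<Rightarrow> 'm \<Rightarrow> 'm \<Rightarrow> bool" where
  "frobenius_morphism_in C A m u d e \<phi> \<longleftrightarrow>
     \<phi> \<in> Hom C A A \<and>
     Cmp C \<phi> m = Cmp C m (Tm C \<phi> \<phi>) \<and> Cmp C \<phi> u = u \<and>
     Cmp C (Tm C \<phi> \<phi>) d = Cmp C d \<phi> \<and> Cmp C e \<phi> = e"

definition extended_structure ::
  "('o, 'm) smcat \<Rightarrow> 'o \<Rightarrow> 'm \<Rightarrow> 'm \<Rightarrow> 'm \<Rightarrow> 'm \<Rightarrow> 'm \<Rightarrow> 'm \<Rightarrow> bool" where
  "extended_structure C A m u d e \<phi> \<theta> \<longleftrightarrow>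
     frobenius_morphism_in C A m u d e \<phi> \<and> Cmp C \<phi> \<phi> = Idm C A \<and>
     \<theta> \<in> Hom C (Uob C) A \<and>
     Cmp C \<phi> (Cmp C m (Tm C \<theta> (Idm C A))) = Cmp C m (Tm C \<theta> (Idm C A)) \<and>
     Cmp C m (Cmp C (Tm C \<phi> (Idm C A)) (Cmp C d u)) = Cmp C m (Tm C \<theta> \<theta>)"

definition extendable ::
  "('o, 'm) smcat \<Rightarrow> 'o \<Rightarrow> 'm \<Rightarrow> 'm \<Rightarrow> 'm \<Rightarrow> 'm \<Rightarrow> bool" where
  "extendable C A m u d e \<longleftrightarrow>
     frobenius_algebra_in C A m u d e \<and> (\<exists>\<phi> \<theta>. extended_structure C A m u d e \<phi> \<theta>)"

definition hopf_frobenius_coproduct ::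
  "('o, 'm) smcat \<Rightarrow> 'o \<Rightarrow> 'm \<Rightarrow> 'm \<Rightarrow> 'm \<Rightarrow> 'm \<Rightarrow> 'm" where
  "hopf_frobenius_coproduct C H m d S \<Lambda> =
     Cmp C (Tm C m S) (Tm C (Idm C H) (Cmp C d \<Lambda>))"

end

theory Submission
  imports Defs
begin

declare One_nat_def[simp del]

locale smc =
  fixes C :: "('o,'m) smcat"
  assumes smc: "strict_symmetric_monoidal_cat C"
begin

lemmas ax = smc[unfolded strict_symmetric_monoidal_cat_def]
lemmas c0 = ax[THEN conjunct1]
lemmas c1 = ax[THEN conjunct2,THEN conjunct1]
lemmas c2 = ax[THEN conjunct2,THEN conjunct2,THEN conjunct1]
lemmas c3 = ax[THEN conjunct2,THEN conjunct2,THEN conjunct2,THEN conjunct1]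
lemmas c4 = ax[THEN conjunct2,THEN conjunct2,THEN conjunct2,THEN conjunct2,THEN conjunct1]
lemmas c5 = ax[THEN conjunct2,THEN conjunct2,THEN conjunct2,THEN conjunct2,THEN conjunct2,THEN conjunct1]
lemmas c6 = ax[THEN conjunct2,THEN conjunct2,THEN conjunct2,THEN conjunct2,THEN conjunct2,THEN conjunct2,THEN conjunct1]
lemmas c7 = ax[THEN conjunct2,THEN conjunct2,THEN conjunct2,THEN conjunct2,THEN conjunct2,THEN conjunct2,THEN conjunct2,THEN conjunct1]
lemmas c8 = ax[THEN conjunct2,THEN conjunct2,THEN conjunct2,THEN conjunct2,THEN conjunct2,THEN conjunct2,THEN conjunct2,THEN conjunct2,THEN conjunct1]
lemmas c9 = ax[THEN conjunct2,THEN conjunct2,THEN conjunct2,THEN conjunct2,THEN conjunct2,THEN conjunct2,THEN conjunct2,THEN conjunct2,THEN conjunct2,THEN conjunct1]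
lemmas c10 = ax[THEN conjunct2,THEN conjunct2,THEN conjunct2,THEN conjunct2,THEN conjunct2,THEN conjunct2,THEN conjunct2,THEN conjunct2,THEN conjunct2,THEN conjunct2,THEN conjunct1]
lemmas c11 = ax[THEN conjunct2,THEN conjunct2,THEN conjunct2,THEN conjunct2,THEN conjunct2,THEN conjunct2,THEN conjunct2,THEN conjunct2,THEN conjunct2,THEN conjunct2,THEN conjunct2,THEN conjunct1]
lemmas c12 = ax[THEN conjunct2,THEN conjunct2,THEN conjunct2,THEN conjunct2,THEN conjunct2,THEN conjunct2,THEN conjunct2,THEN conjunct2,THEN conjunct2,THEN conjunct2,THEN conjunct2,THEN conjunct2,THEN conjunct1]
lemmas c13 = ax[THEN conjunct2,THEN conjunct2,THEN conjunct2,THEN conjunct2,THEN conjunct2,THEN conjunct2,THEN conjunct2,THEN conjunct2,THEN conjunct2,THEN conjunct2,THEN conjunct2,THEN conjunct2,THEN conjunct2,THEN conjunct1]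
lemmas c14 = ax[THEN conjunct2,THEN conjunct2,THEN conjunct2,THEN conjunct2,THEN conjunct2,THEN conjunct2,THEN conjunct2,THEN conjunct2,THEN conjunct2,THEN conjunct2,THEN conjunct2,THEN conjunct2,THEN conjunct2,THEN conjunct2,THEN conjunct1]
lemmas c15 = ax[THEN conjunct2,THEN conjunct2,THEN conjunct2,THEN conjunct2,THEN conjunct2,THEN conjunct2,THEN conjunct2,THEN conjunct2,THEN conjunct2,THEN conjunct2,THEN conjunct2,THEN conjunct2,THEN conjunct2,THEN conjunct2,THEN conjunct2,THEN conjunct1]
lemmas c16 = ax[THEN conjunct2,THEN conjunct2,THEN conjunct2,THEN conjunct2,THEN conjunct2,THEN conjunct2,THEN conjunct2,THEN conjunct2,THEN conjunct2,THEN conjunct2,THEN conjunct2,THEN conjunct2,THEN conjunct2,THEN conjunct2,THEN conjunct2,THEN conjunct2,THEN conjunct1]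
lemmas c17 = ax[THEN conjunct2,THEN conjunct2,THEN conjunct2,THEN conjunct2,THEN conjunct2,THEN conjunct2,THEN conjunct2,THEN conjunct2,THEN conjunct2,THEN conjunct2,THEN conjunct2,THEN conjunct2,THEN conjunct2,THEN conjunct2,THEN conjunct2,THEN conjunct2,THEN conjunct2]

lemma hom_obj: "f \<in> Hom C A B \<Longrightarrow> A \<in> Obj C \<and> B \<in> Obj C" using c0 by blast
lemma id_hom: "A \<in> Obj C \<Longrightarrow> Idm C A \<in> Hom C A A" using c1 by blast
lemma cmp_hom: "f \<in> Hom C A B \<Longrightarrow> g \<in> Hom C B D \<Longrightarrow> Cmp C g f \<in> Hom C A D" using c2 by blast
lemma id_l: "f \<in> Hom C A B \<Longrightarrow> Cmp C (Idm C B) f = f" using c3 by blast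
lemma id_r: "f \<in> Hom C A B \<Longrightarrow> Cmp C f (Idm C A) = f" using c3 by blast
lemma cmp_assoc: "f \<in> Hom C A B \<Longrightarrow> g \<in> Hom C B D \<Longrightarrow> h \<in> Hom C D E \<Longrightarrow>
        Cmp C h (Cmp C g f) = Cmp C (Cmp C h g) f" using c4 by blast
lemma U_obj: "Uob C \<in> Obj C" using c5 by blast
lemma tob_obj: "A \<in> Obj C \<Longrightarrow> B \<in> Obj C \<Longrightarrow> Tob C A B \<in> Obj C" using c6 by blast
lemma tm_hom: "f \<in> Hom C A B \<Longrightarrow> g \<in> Hom C D E \<Longrightarrow> Tm C f g \<in> Hom C (Tob C A D) (Tob C B E)" using c7 by blast
lemma tm_id: "A \<in> Obj C \<Longrightarrow> B \<in> Obj C \<Longrightarrow> Tm C (Idm C A) (Idm C B) = Idm C (Tob C A B)" using c8 by blast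
lemma interchange: "f \<in> Hom C A B \<Longrightarrow> g \<in> Hom C B D \<Longrightarrow>
        f' \<in> Hom C A' B' \<Longrightarrow> g' \<in> Hom C B' D' \<Longrightarrow>
        Tm C (Cmp C g f) (Cmp C g' f') = Cmp C (Tm C g g') (Tm C f f')" using c9 by blast
lemma tob_assoc: "A \<in> Obj C \<Longrightarrow> B \<in> Obj C \<Longrightarrow> D \<in> Obj C \<Longrightarrow> Tob C (Tob C A B) D = Tob C A (Tob C B D)" using c10 by blast
lemma tm_assoc: "f \<in> Hom C A B \<Longrightarrow> g \<in> Hom C D E \<Longrightarrow> h \<in> Hom C F G \<Longrightarrow>
        Tm C (Tm C f g) h = Tm C f (Tm C g h)" using c11 by blast
lemma tob_unitl: "A \<in> Obj C \<Longrightarrow> Tob C (Uob C) A = A" using c12 by blast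
lemma tob_unitr: "A \<in> Obj C \<Longrightarrow> Tob C A (Uob C) = A" using c12 by blast
lemma tm_unitl: "f \<in> Hom C A B \<Longrightarrow> Tm C (Idm C (Uob C)) f = f" using c13 by blast
lemma tm_unitr: "f \<in> Hom C A B \<Longrightarrow> Tm C f (Idm C (Uob C)) = f" using c13 by blast
lemma sy_hom: "A \<in> Obj C \<Longrightarrow> B \<in> Obj C \<Longrightarrow> Sy C A B \<in> Hom C (Tob C A B) (Tob C B A)" using c14 by blast
lemma sy_nat: "f \<in> Hom C A B \<Longrightarrow> g \<in> Hom C D E \<Longrightarrow>
        Cmp C (Sy C B E) (Tm C f g) = Cmp C (Tm C g f) (Sy C A D)" using c15 by blast
lemma sy_inv: "A \<in> Obj C \<Longrightarrow> B \<in> Obj C \<Longrightarrow> Cmp C (Sy C B A) (Sy C A B) = Idm C (Tob C A B)" using c16 by blast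
lemma sy_hex: "A \<in> Obj C \<Longrightarrow> B \<in> Obj C \<Longrightarrow> D \<in> Obj C \<Longrightarrow>
        Sy C A (Tob C B D) = Cmp C (Tm C (Idm C B) (Sy C A D)) (Tm C (Sy C A B) (Idm C D))" using c17 by blast

lemma sy_unit: assumes A: "A \<in> Obj C"
  shows "Sy C A (Uob C) = Idm C A" "Sy C (Uob C) A = Idm C A"
proof -
  have U: "Uob C \<in> Obj C" by (rule U_obj)
  let ?s = "Sy C A (Uob C)" and ?t = "Sy C (Uob C) A"
  have s: "?s \<in> Hom C A A" using sy_hom[OF A U] tob_unitl[OF A] tob_unitr[OF A] by simp
  have t: "?t \<in> Hom C A A" using sy_hom[OF U A] tob_unitl[OF A] tob_unitr[OF A] by simp
  have ss: "?s = Cmp C ?s ?s" using sy_hex[OF A U U] tob_unitl[OF U] tm_unitl[OF s] tm_unitr[OF s] by simp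
  have ts: "Cmp C ?t ?s = Idm C A" using sy_inv[OF A U] tob_unitr[OF A] by simp
  have "?s = Cmp C (Cmp C ?t ?s) ?s" using ts id_l[OF s] by simp
  also have "\<dots> = Cmp C ?t (Cmp C ?s ?s)" using cmp_assoc[OF s s t] by simp
  also have "\<dots> = Idm C A" using ss ts by simp
  finally show 1: "?s = Idm C A" .
  show "?t = Idm C A" using ts 1 id_r[OF t] by simp
qed

lemma sy_hex2: assumes A: "A \<in> Obj C" and B: "B \<in> Obj C" and D: "D \<in> Obj C"
  shows "Sy C (Tob C A B) D = Cmp C (Tm C (Sy C A D) (Idm C B)) (Tm C (Idm C A) (Sy C B D))"
proof -
  have AB: "Tob C A B \<in> Obj C" using A B by (rule tob_obj)
  let ?X = "Sy C D (Tob C A B)"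
  let ?Y = "Cmp C (Tm C (Sy C A D) (Idm C B)) (Tm C (Idm C A) (Sy C B D))"
  let ?Z = "Sy C (Tob C A B) D"
  have X: "?X = Cmp C (Tm C (Idm C A) (Sy C D B)) (Tm C (Sy C D A) (Idm C B))" by (rule sy_hex[OF D A B])
  have h1: "Sy C D A \<in> Hom C (Tob C D A) (Tob C A D)" by (rule sy_hom[OF D A])
  have h2: "Sy C A D \<in> Hom C (Tob C A D) (Tob C D A)" by (rule sy_hom[OF A D])
  have h3: "Sy C D B \<in> Hom C (Tob C D B) (Tob C B D)" by (rule sy_hom[OF D B])
  have h4: "Sy C B D \<in> Hom C (Tob C B D) (Tob C D B)" by (rule sy_hom[OF B D])
  have iA: "Idm C A \<in> Hom C A A" by (rule id_hom[OF A])
  have iB: "Idm C B \<in> Hom C B B" by (rule id_hom[OF B])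
  have t1: "Tm C (Sy C D A) (Idm C B) \<in> Hom C (Tob C D (Tob C A B)) (Tob C A (Tob C D B))"
    using tm_hom[OF h1 iB] tob_assoc A B D by simp
  have t2: "Tm C (Idm C A) (Sy C D B) \<in> Hom C (Tob C A (Tob C D B)) (Tob C A (Tob C B D))"
    using tm_hom[OF iA h3] by simp
  have t3: "Tm C (Idm C A) (Sy C B D) \<in> Hom C (Tob C A (Tob C B D)) (Tob C A (Tob C D B))"
    using tm_hom[OF iA h4] by simp
  have t4: "Tm C (Sy C A D) (Idm C B) \<in> Hom C (Tob C A (Tob C D B)) (Tob C D (Tob C A B))"
    using tm_hom[OF h2 iB] tob_assoc A B D by simp
  have Z: "?Z \<in> Hom C (Tob C A (Tob C B D)) (Tob C D (Tob C A B))"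
    using sy_hom[OF AB D] tob_assoc A B D by simp
  have YX: "Cmp C ?Y ?X = Idm C (Tob C D (Tob C A B))"
  proof -
    have "Cmp C ?Y ?X = Cmp C (Tm C (Sy C A D) (Idm C B)) (Cmp C (Cmp C (Tm C (Idm C A) (Sy C B D)) (Tm C (Idm C A) (Sy C D B))) (Tm C (Sy C D A) (Idm C B)))"
      unfolding X using cmp_assoc[OF t1 t2 t3] cmp_assoc[OF cmp_hom[OF t1 t2] t3 t4, symmetric] by simp
    also have "Cmp C (Tm C (Idm C A) (Sy C B D)) (Tm C (Idm C A) (Sy C D B)) = Idm C (Tob C A (Tob C D B))"
      using interchange[OF iA iA h3 h4] sy_inv[OF D B] id_l[OF iA] tm_id[OF A tob_obj[OF D B]] by simp
    also have "Cmp C (Idm C (Tob C A (Tob C D B))) (Tm C (Sy C D A) (Idm C B)) = Tm C (Sy C D A) (Idm C B)"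
      using id_l[OF t1] .
    also have "Cmp C (Tm C (Sy C A D) (Idm C B)) (Tm C (Sy C D A) (Idm C B)) = Idm C (Tob C D (Tob C A B))"
      using interchange[OF h1 h2 iB iB] sy_inv[OF D A] id_l[OF iB] tm_id[OF tob_obj[OF D A] B] tob_assoc A B D by simp
    finally show ?thesis .
  qed
  have XZ: "Cmp C ?X ?Z = Idm C (Tob C (Tob C A B) D)" by (rule sy_inv[OF AB D])
  have Y: "?Y \<in> Hom C (Tob C A (Tob C B D)) (Tob C D (Tob C A B))" using cmp_hom[OF t3 t4] .
  have "?Z = Cmp C (Cmp C ?Y ?X) ?Z" using YX id_l[OF Z] by simp
  also have "\<dots> = Cmp C ?Y (Cmp C ?X ?Z)" using cmp_assoc[OF Z _ Y] sy_hom[OF D AB] tob_assoc A B D by simp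
  also have "\<dots> = ?Y" using XZ id_r[OF Y] tob_assoc A B D by simp
  finally show ?thesis .
qed

end


type_synonym 'm arr = "nat \<times> 'm \<times> nat"

locale smcH = smc C for C :: "('o,'m) smcat" +
  fixes H :: 'o
  assumes H: "H \<in> Obj C"
begin

primrec pw :: "nat \<Rightarrow> 'o" where "pw 0 = Uob C" | "pw (Suc n) = Tob C H (pw n)"

lemma pw_obj[simp]: "pw n \<in> Obj C" by (induct n) (simp_all add: U_obj tob_obj H)
lemma pw_add: "pw (a+b) = Tob C (pw a) (pw b)"
  by (induct a) (simp_all add: tob_unitl tob_assoc H)
lemma pw1[simp]: "pw 1 = H" using tob_unitr[OF H] by (simp add: One_nat_def)
lemma pw2[simp]: "pw 2 = Tob C H H"
  by (simp add: numeral_2_eq_2 tob_unitr H)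
lemma pw1'[simp]: "pw (Suc 0) = H" using pw1 by (simp add: One_nat_def)
declare pw.simps(2)[simp del]

definition dm :: "'m arr \<Rightarrow> nat" where "dm x = fst x"
definition cd :: "'m arr \<Rightarrow> nat" where "cd x = snd (snd x)"
definition mr :: "'m arr \<Rightarrow> 'm" where "mr x = fst (snd x)"
definition wt :: "'m arr \<Rightarrow> bool" where "wt x \<longleftrightarrow> mr x \<in> Hom C (pw (dm x)) (pw (cd x))"
definition cmp :: "'m arr \<Rightarrow> 'm arr \<Rightarrow> 'm arr" (infixr "\<odot>" 55)
  where "g \<odot> f = (dm f, Cmp C (mr g) (mr f), cd g)"
definition tm :: "'m arr \<Rightarrow> 'm arr \<Rightarrow> 'm arr" (infixr "\<otimes>" 65)
  where "f \<otimes> g = (dm f + dm g, Tm C (mr f) (mr g), cd f + cd g)"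
definition idn :: "nat \<Rightarrow> 'm arr" where "idn n = (n, Idm C (pw n), n)"
definition sy :: "nat \<Rightarrow> nat \<Rightarrow> 'm arr" where "sy a b = (a+b, Sy C (pw a) (pw b), b+a)"
definition at :: "nat \<Rightarrow> 'm \<Rightarrow> nat \<Rightarrow> 'm arr" where "at a f b = (a, f, b)"

lemma dm_simps[simp]: "dm (g \<odot> f) = dm f" "dm (f \<otimes> g) = dm f + dm g" "dm (idn n) = n"
  "dm (sy a b) = a + b" "dm (at a k b) = a"
  by (simp_all add: dm_def cmp_def tm_def idn_def sy_def at_def)
lemma cd_simps[simp]: "cd (g \<odot> f) = cd g" "cd (f \<otimes> g) = cd f + cd g" "cd (idn n) = n"
  "cd (sy a b) = b + a" "cd (at a k b) = b"
  by (simp_all add: cd_def cmp_def tm_def idn_def sy_def at_def)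
lemma mr_simps[simp]: "mr (g \<odot> f) = Cmp C (mr g) (mr f)" "mr (f \<otimes> g) = Tm C (mr f) (mr g)"
  "mr (idn n) = Idm C (pw n)" "mr (sy a b) = Sy C (pw a) (pw b)" "mr (at a k b) = k"
  by (simp_all add: mr_def cmp_def tm_def idn_def sy_def at_def)

lemma arr_eq: "dm x = dm y \<Longrightarrow> cd x = cd y \<Longrightarrow> mr x = mr y \<Longrightarrow> x = y"
  by (cases x; cases y) (simp add: dm_def cd_def mr_def)

lemma wt_cmp[simp]: "wt f \<Longrightarrow> wt g \<Longrightarrow> cd f = dm g \<Longrightarrow> wt (g \<odot> f)"
  unfolding wt_def by (auto intro: cmp_hom)
lemma wt_tm[simp]: "wt f \<Longrightarrow> wt g \<Longrightarrow> wt (f \<otimes> g)"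
  unfolding wt_def using tm_hom by (simp add: pw_add)
lemma wt_idn[simp]: "wt (idn n)" unfolding wt_def by (simp add: id_hom)
lemma wt_sy[simp]: "wt (sy a b)" unfolding wt_def by (simp add: sy_hom pw_add)
lemma wt_at: "wt (at a f b) \<longleftrightarrow> f \<in> Hom C (pw a) (pw b)" unfolding wt_def by simp

lemma wtD: "wt f \<Longrightarrow> mr f \<in> Hom C (pw (dm f)) (pw (cd f))" by (simp add: wt_def)

lemma cmpA: "wt f \<Longrightarrow> wt g \<Longrightarrow> wt h \<Longrightarrow> cd f = dm g \<Longrightarrow> cd g = dm h \<Longrightarrow> (h \<odot> g) \<odot> f = h \<odot> (g \<odot> f)"
  by (rule arr_eq) (auto dest!: wtD simp: cmp_assoc)
lemma idL: "wt f \<Longrightarrow> cd f = n \<Longrightarrow> idn n \<odot> f = f"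
  by (rule arr_eq) (auto dest!: wtD simp: id_l)
lemma idR: "wt f \<Longrightarrow> dm f = n \<Longrightarrow> f \<odot> idn n = f"
  by (rule arr_eq) (auto dest!: wtD simp: id_r)
lemma tmA: "wt f \<Longrightarrow> wt g \<Longrightarrow> wt h \<Longrightarrow> (f \<otimes> g) \<otimes> h = f \<otimes> (g \<otimes> h)"
  by (rule arr_eq) (auto dest!: wtD simp: tm_assoc)
lemma tmI: "idn a \<otimes> idn b = idn (a+b)"
  by (rule arr_eq) (auto simp: tm_id pw_add)
lemma tmI2: "wt f \<Longrightarrow> idn a \<otimes> (idn b \<otimes> f) = idn (a+b) \<otimes> f"
  by (simp add: tmA[symmetric] tmI)
lemma tmU1: "wt f \<Longrightarrow> idn 0 \<otimes> f = f"
  by (rule arr_eq) (auto dest!: wtD simp: tm_unitl)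
lemma tmU2: "wt f \<Longrightarrow> f \<otimes> idn 0 = f"
  by (rule arr_eq) (auto dest!: wtD simp: tm_unitr)
lemma xch: "wt f \<Longrightarrow> wt g \<Longrightarrow> wt f' \<Longrightarrow> wt g' \<Longrightarrow> cd f = dm g \<Longrightarrow> cd f' = dm g' \<Longrightarrow>
   (g \<odot> f) \<otimes> (g' \<odot> f') = (g \<otimes> g') \<odot> (f \<otimes> f')"
  by (rule arr_eq) (auto dest!: wtD simp: interchange)
lemma syN: "wt f \<Longrightarrow> wt g \<Longrightarrow> sy (cd f) (cd g) \<odot> (f \<otimes> g) = (g \<otimes> f) \<odot> sy (dm f) (dm g)"
  by (rule arr_eq) (auto dest!: wtD simp: sy_nat)
lemma syI: "sy b a \<odot> sy a b = idn (a+b)"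
  by (rule arr_eq) (auto simp: sy_inv pw_add)
lemma sy0: "sy a 0 = idn a" "sy 0 a = idn a"
  by (rule arr_eq; simp add: sy_unit)+
lemma syH: "sy a (b+c) = (idn b \<otimes> sy a c) \<odot> (sy a b \<otimes> idn c)"
  by (rule arr_eq) (auto simp: sy_hex pw_add)
lemma syH2: "sy (a+b) c = (sy a c \<otimes> idn b) \<odot> (idn a \<otimes> sy b c)"
  by (rule arr_eq) (auto simp: sy_hex2 pw_add)

end


context smcH begin
lemmas N = cmpA tmA idL idR tmU1 tmU2 tmI tmI2

lemma sp1: "wt f \<Longrightarrow> wt g \<Longrightarrow> f \<otimes> g = (f \<otimes> idn (cd g)) \<odot> (idn (dm f) \<otimes> g)"
  by (subst xch[symmetric]) (simp_all add: idL idR)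
lemma sp2: "wt f \<Longrightarrow> wt g \<Longrightarrow> f \<otimes> g = (idn (cd f) \<otimes> g) \<odot> (f \<otimes> idn (dm g))"
  by (subst xch[symmetric]) (simp_all add: idL idR)
lemma cx: "g \<odot> f = h \<Longrightarrow> wt f \<Longrightarrow> wt g \<Longrightarrow> wt x \<Longrightarrow> cd f = dm g \<Longrightarrow> cd x = dm f \<Longrightarrow> g \<odot> (f \<odot> x) = h \<odot> x"
  by (simp add: cmpA[symmetric])
lemma M0: "wt f \<Longrightarrow> wt g \<Longrightarrow> wt f' \<Longrightarrow> wt g' \<Longrightarrow> cd f = dm g \<Longrightarrow> cd f' = dm g' \<Longrightarrow>
   (g \<otimes> g') \<odot> (f \<otimes> f') = (g \<odot> f) \<otimes> (g' \<odot> f')"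
  by (simp add: xch)
lemma M0t: "wt f \<Longrightarrow> wt g \<Longrightarrow> wt f' \<Longrightarrow> wt g' \<Longrightarrow> wt x \<Longrightarrow> cd f = dm g \<Longrightarrow> cd f' = dm g' \<Longrightarrow> cd x = dm f + dm f' \<Longrightarrow>
   (g \<otimes> g') \<odot> ((f \<otimes> f') \<odot> x) = ((g \<odot> f) \<otimes> (g' \<odot> f')) \<odot> x"
  by (simp add: xch cmpA[symmetric])
lemma M1: "wt f \<Longrightarrow> wt g1 \<Longrightarrow> wt g2 \<Longrightarrow> wt g3 \<Longrightarrow> wt f' \<Longrightarrow> cd f = dm g1 + dm g2 \<Longrightarrow> cd f' = dm g3 \<Longrightarrow>
   (g1 \<otimes> (g2 \<otimes> g3)) \<odot> (f \<otimes> f') = ((g1 \<otimes> g2) \<odot> f) \<otimes> (g3 \<odot> f')"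
  by (simp add: xch tmA[symmetric])
lemma M1t: "wt f \<Longrightarrow> wt g1 \<Longrightarrow> wt g2 \<Longrightarrow> wt g3 \<Longrightarrow> wt f' \<Longrightarrow> wt x \<Longrightarrow> cd f = dm g1 + dm g2 \<Longrightarrow> cd f' = dm g3 \<Longrightarrow> cd x = dm f + dm f' \<Longrightarrow>
   (g1 \<otimes> (g2 \<otimes> g3)) \<odot> ((f \<otimes> f') \<odot> x) = (((g1 \<otimes> g2) \<odot> f) \<otimes> (g3 \<odot> f')) \<odot> x"
  by (simp add: xch tmA[symmetric] cmpA[symmetric])
lemma M2: "wt f1 \<Longrightarrow> wt f2 \<Longrightarrow> wt f3 \<Longrightarrow> wt g \<Longrightarrow> wt g' \<Longrightarrow> cd f1 + cd f2 = dm g \<Longrightarrow> cd f3 = dm g' \<Longrightarrow>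
   (g \<otimes> g') \<odot> (f1 \<otimes> (f2 \<otimes> f3)) = (g \<odot> (f1 \<otimes> f2)) \<otimes> (g' \<odot> f3)"
  by (simp add: xch tmA[symmetric])
lemma M2t: "wt f1 \<Longrightarrow> wt f2 \<Longrightarrow> wt f3 \<Longrightarrow> wt g \<Longrightarrow> wt g' \<Longrightarrow> wt x \<Longrightarrow> cd f1 + cd f2 = dm g \<Longrightarrow> cd f3 = dm g' \<Longrightarrow> cd x = dm f1 + dm f2 + dm f3 \<Longrightarrow>
   (g \<otimes> g') \<odot> ((f1 \<otimes> (f2 \<otimes> f3)) \<odot> x) = ((g \<odot> (f1 \<otimes> f2)) \<otimes> (g' \<odot> f3)) \<odot> x"
  by (simp add: xch tmA[symmetric] cmpA[symmetric])
lemma M3: "wt f1 \<Longrightarrow> wt f2 \<Longrightarrow> wt f3 \<Longrightarrow> wt g1 \<Longrightarrow> wt g2 \<Longrightarrow> wt g3 \<Longrightarrow> cd f1 + cd f2 = dm g1 + dm g2 \<Longrightarrow> cd f3 = dm g3 \<Longrightarrow>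
   (g1 \<otimes> (g2 \<otimes> g3)) \<odot> (f1 \<otimes> (f2 \<otimes> f3)) = ((g1 \<otimes> g2) \<odot> (f1 \<otimes> f2)) \<otimes> (g3 \<odot> f3)"
  by (simp add: xch tmA[symmetric])
lemma M3t: "wt f1 \<Longrightarrow> wt f2 \<Longrightarrow> wt f3 \<Longrightarrow> wt g1 \<Longrightarrow> wt g2 \<Longrightarrow> wt g3 \<Longrightarrow> wt x \<Longrightarrow> cd f1 + cd f2 = dm g1 + dm g2 \<Longrightarrow> cd f3 = dm g3 \<Longrightarrow> cd x = dm f1 + dm f2 + dm f3 \<Longrightarrow>
   (g1 \<otimes> (g2 \<otimes> g3)) \<odot> ((f1 \<otimes> (f2 \<otimes> f3)) \<odot> x) = (((g1 \<otimes> g2) \<odot> (f1 \<otimes> f2)) \<otimes> (g3 \<odot> f3)) \<odot> x"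
  by (simp add: xch tmA[symmetric] cmpA[symmetric])
lemma idn2: "idn 2 = idn 1 \<otimes> idn 1" by (simp add: tmI)
lemma idn3: "idn 3 = idn 1 \<otimes> idn 1 \<otimes> idn 1" by (simp add: tmI)
lemma idn4: "idn 4 = idn 1 \<otimes> idn 1 \<otimes> idn 1 \<otimes> idn 1" by (simp add: tmI)
lemma id2L: "wt f \<Longrightarrow> cd f = 2 \<Longrightarrow> (idn 1 \<otimes> idn 1) \<odot> f = f" by (simp add: tmI idL)
lemma id2R: "wt f \<Longrightarrow> dm f = 2 \<Longrightarrow> f \<odot> (idn 1 \<otimes> idn 1) = f" by (simp add: tmI idR)
lemma id3L: "wt f \<Longrightarrow> cd f = 3 \<Longrightarrow> (idn 1 \<otimes> idn 1 \<otimes> idn 1) \<odot> f = f" by (simp add: tmI idL)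
lemma id3R: "wt f \<Longrightarrow> dm f = 3 \<Longrightarrow> f \<odot> (idn 1 \<otimes> idn 1 \<otimes> idn 1) = f" by (simp add: tmI idR)
lemmas NR = cmpA tmA idL idR tmU1 tmU2 M0 M0t M1 M1t M2 M2t M3 M3t idn2 idn3 idn4 id2L id2R id3L id3R
lemma cx3: "c \<odot> (b \<odot> a) = h \<Longrightarrow> wt a \<Longrightarrow> wt b \<Longrightarrow> wt c \<Longrightarrow> wt x \<Longrightarrow> cd a = dm b \<Longrightarrow> cd b = dm c \<Longrightarrow> cd x = dm a \<Longrightarrow> c \<odot> (b \<odot> (a \<odot> x)) = h \<odot> x"
  by (simp add: cmpA[symmetric])
lemma xl: "wt f \<Longrightarrow> wt g \<Longrightarrow> cd f = dm g \<Longrightarrow> (g \<odot> f) \<otimes> idn n = (g \<otimes> idn n) \<odot> (f \<otimes> idn n)"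
  by (subst xch[symmetric]) (simp_all add: idL)
lemma xr: "wt f \<Longrightarrow> wt g \<Longrightarrow> cd f = dm g \<Longrightarrow> idn n \<otimes> (g \<odot> f) = (idn n \<otimes> g) \<odot> (idn n \<otimes> f)"
  by (subst xch[symmetric]) (simp_all add: idL)
end

locale hopfH = smcH C H for C :: "('o,'m) smcat" and H +
  fixes m u d e S
  assumes hopf: "hopf_algebra_in C H m u d e S"
begin

abbreviation "\<mu> \<equiv> at 2 m 1"
abbreviation "\<eta> \<equiv> at 0 u 1"
abbreviation "\<delta> \<equiv> at 1 d 2"
abbreviation "\<epsilon> \<equiv> at 1 e 0"
abbreviation "s \<equiv> at 1 S 1"
abbreviation "\<iota> \<equiv> idn 1"
abbreviation "\<sigma> \<equiv> sy 1 1"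

lemmas hd = hopf[unfolded hopf_algebra_in_def algebra_in_def coalgebra_in_def]

lemma wt_atoms[simp]: "wt \<mu>" "wt \<eta>" "wt \<delta>" "wt \<epsilon>" "wt s"
  using hd by (simp_all add: wt_at)

lemma mA: "\<mu> \<odot> (\<mu> \<otimes> \<iota>) = \<mu> \<odot> (\<iota> \<otimes> \<mu>)"
  by (rule arr_eq) (use hd in simp_all)
lemma mU1: "\<mu> \<odot> (\<eta> \<otimes> \<iota>) = \<iota>" by (rule arr_eq) (use hd in simp_all)
lemma mU2: "\<mu> \<odot> (\<iota> \<otimes> \<eta>) = \<iota>" by (rule arr_eq) (use hd in simp_all)
lemma dA: "(\<delta> \<otimes> \<iota>) \<odot> \<delta> = (\<iota> \<otimes> \<delta>) \<odot> \<delta>" by (rule arr_eq) (use hd in simp_all)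
lemma dU1: "(\<epsilon> \<otimes> \<iota>) \<odot> \<delta> = \<iota>" by (rule arr_eq) (use hd in simp_all)
lemma dU2: "(\<iota> \<otimes> \<epsilon>) \<odot> \<delta> = \<iota>" by (rule arr_eq) (use hd in simp_all)
lemma bi: "\<delta> \<odot> \<mu> = (\<mu> \<otimes> \<mu>) \<odot> ((\<iota> \<otimes> (\<sigma> \<otimes> \<iota>)) \<odot> (\<delta> \<otimes> \<delta>))"
  by (rule arr_eq) (use hd in simp_all)
lemma du: "\<delta> \<odot> \<eta> = \<eta> \<otimes> \<eta>" by (rule arr_eq) (use hd in simp_all)
lemma em: "\<epsilon> \<odot> \<mu> = \<epsilon> \<otimes> \<epsilon>" by (rule arr_eq) (use hd in simp_all)
lemma eu: "\<epsilon> \<odot> \<eta> = idn 0" by (rule arr_eq) (use hd in simp_all)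
lemma ap1: "\<mu> \<odot> ((s \<otimes> \<iota>) \<odot> \<delta>) = \<eta> \<odot> \<epsilon>" by (rule arr_eq) (use hd in simp_all)
lemma ap2: "\<mu> \<odot> ((\<iota> \<otimes> s) \<odot> \<delta>) = \<eta> \<odot> \<epsilon>" by (rule arr_eq) (use hd in simp_all)

lemma Su: "s \<odot> \<eta> = \<eta>"
proof -
  have "s \<odot> \<eta> = \<mu> \<odot> ((\<iota> \<otimes> \<eta>) \<odot> (s \<odot> \<eta>))" by (simp add: N cx[OF mU2])
  also have "(\<iota> \<otimes> \<eta>) \<odot> (s \<odot> \<eta>) = (s \<odot> \<eta>) \<otimes> \<eta>" by (subst sp2[of "s \<odot> \<eta>"]) (simp_all add: N)
  also have "\<dots> = (s \<otimes> \<iota>) \<odot> (\<eta> \<otimes> \<eta>)" by (subst xch[symmetric]) (simp_all add: N)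
  also have "\<dots> = (s \<otimes> \<iota>) \<odot> (\<delta> \<odot> \<eta>)" by (simp add: du)
  also have "\<mu> \<odot> ((s \<otimes> \<iota>) \<odot> (\<delta> \<odot> \<eta>)) = (\<eta> \<odot> \<epsilon>) \<odot> \<eta>" by (simp add: N ap1[symmetric])
  also have "\<dots> = \<eta>" by (simp add: N eu)
  finally show ?thesis .
qed


definition "D2 = (\<iota> \<otimes> \<sigma> \<otimes> \<iota>) \<odot> (\<delta> \<otimes> \<delta>)"
definition "conv f g = \<mu> \<odot> (f \<otimes> g) \<odot> D2"
definition "e2 = \<eta> \<odot> (\<epsilon> \<otimes> \<epsilon>)"
definition "Nn = \<mu> \<odot> (s \<otimes> s) \<odot> \<sigma>"

lemma wt_D2[simp]: "wt D2" "dm D2 = 2" "cd D2 = 4" by (simp_all add: D2_def)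
lemma wt_e2[simp]: "wt e2" "dm e2 = 2" "cd e2 = 1" by (simp_all add: e2_def)
lemma wt_Nn[simp]: "wt Nn" "dm Nn = 2" "cd Nn = 1" by (simp_all add: Nn_def)
lemma wt_conv[simp]: "wt f \<Longrightarrow> wt g \<Longrightarrow> dm f = 2 \<Longrightarrow> dm g = 2 \<Longrightarrow> cd f = 1 \<Longrightarrow> cd g = 1 \<Longrightarrow> wt (conv f g)"
  by (simp add: conv_def)
lemma dm_conv[simp]: "dm (conv f g) = 2" "cd (conv f g) = 1" by (simp_all add: conv_def)

lemma c1: "conv \<mu> (s \<odot> \<mu>) = e2"
proof -
  have "conv \<mu> (s \<odot> \<mu>) = \<mu> \<odot> (\<iota> \<otimes> s) \<odot> (\<delta> \<odot> \<mu>)" by (simp add: NR bi conv_def D2_def)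
  also have "\<dots> = (\<eta> \<odot> \<epsilon>) \<odot> \<mu>" by (simp add: NR cx3[OF ap2])
  also have "\<dots> = e2" by (simp add: NR em e2_def)
  finally show ?thesis .
qed

end

context smcH begin
lemmas NA = cmpA tmA idL idR tmU1 tmU2 idn2 idn3 idn4 id2L id2R id3L id3R
lemma zl: "wt f \<Longrightarrow> wt g \<Longrightarrow> cd f = 0 \<Longrightarrow> f \<otimes> g = g \<odot> (f \<otimes> idn (dm g))"
  using xch[of f "idn 0" "idn (dm g)" g] by (simp add: idL idR tmU1)
lemma zr: "wt f \<Longrightarrow> wt g \<Longrightarrow> cd f = 0 \<Longrightarrow> g \<otimes> f = g \<odot> (idn (dm g) \<otimes> f)"
  using xch[of "idn (dm g)" g f "idn 0"] by (simp add: idL idR tmU2)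
end
context hopfH begin

lemma uL: "wt y \<Longrightarrow> wt b \<Longrightarrow> cd y = 0 \<Longrightarrow> cd b = 1 \<Longrightarrow> \<mu> \<odot> ((\<eta> \<odot> y) \<otimes> b) = y \<otimes> b"
proof -
  assume a: "wt y" "wt b" "cd y = 0" "cd b = 1"
  have "\<mu> \<odot> ((\<eta> \<odot> y) \<otimes> b) = (\<mu> \<odot> (\<eta> \<otimes> \<iota>)) \<odot> (y \<otimes> b)" using a by (simp add: NR)
  also have "\<dots> = y \<otimes> b" using a by (simp add: mU1 NR)
  finally show ?thesis .
qed
lemma uR: "wt y \<Longrightarrow> wt b \<Longrightarrow> cd y = 0 \<Longrightarrow> cd b = 1 \<Longrightarrow> \<mu> \<odot> (b \<otimes> (\<eta> \<odot> y)) = b \<otimes> y"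
proof -
  assume a: "wt y" "wt b" "cd y = 0" "cd b = 1"
  have "\<mu> \<odot> (b \<otimes> (\<eta> \<odot> y)) = (\<mu> \<odot> (\<iota> \<otimes> \<eta>)) \<odot> (b \<otimes> y)" using a by (simp add: NR)
  also have "\<dots> = b \<otimes> y" using a by (simp add: mU2 NR)
  finally show ?thesis .
qed
lemma uL0: "wt b \<Longrightarrow> cd b = 1 \<Longrightarrow> \<mu> \<odot> (\<eta> \<otimes> b) = b"
  using uL[of "idn 0" b] by (simp add: NR)
lemma uR0: "wt b \<Longrightarrow> cd b = 1 \<Longrightarrow> \<mu> \<odot> (b \<otimes> \<eta>) = b"
  using uR[of "idn 0" b] by (simp add: NR)

lemma mm: "\<mu> \<odot> (\<mu> \<otimes> \<mu>) = \<mu> \<odot> (\<iota> \<otimes> \<mu>) \<odot> (\<iota> \<otimes> \<mu> \<otimes> \<iota>)"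
proof -
  have "\<mu> \<odot> (\<mu> \<otimes> \<mu>) = \<mu> \<odot> (\<mu> \<otimes> \<iota>) \<odot> (\<iota> \<otimes> \<iota> \<otimes> \<mu>)" by (simp add: NR)
  also have "\<dots> = \<mu> \<odot> (\<iota> \<otimes> \<mu>) \<odot> (\<iota> \<otimes> \<iota> \<otimes> \<mu>)" by (simp add: cx[OF mA] cmpA)
  also have "\<dots> = \<mu> \<odot> (\<iota> \<otimes> (\<mu> \<odot> (\<iota> \<otimes> \<mu>)))" by (simp add: NR)
  also have "\<dots> = \<mu> \<odot> (\<iota> \<otimes> (\<mu> \<odot> (\<mu> \<otimes> \<iota>)))" by (simp only: mA)
  also have "\<dots> = \<mu> \<odot> (\<iota> \<otimes> \<mu>) \<odot> (\<iota> \<otimes> \<mu> \<otimes> \<iota>)" by (simp add: NR)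
  finally show ?thesis .
qed


lemma h21: "sy 2 1 = (\<sigma> \<otimes> \<iota>) \<odot> (\<iota> \<otimes> \<sigma>)"
  using syH2[of 1 1 1] by simp
lemma h12: "sy 1 2 = (\<iota> \<otimes> \<sigma>) \<odot> (\<sigma> \<otimes> \<iota>)"
  using syH[of 1 1 1] by simp

lemma P1: "(\<sigma> \<otimes> \<iota> \<otimes> \<iota>) \<odot> (\<iota> \<otimes> \<sigma> \<otimes> \<iota>) \<odot> (\<delta> \<otimes> \<delta>) = (\<iota> \<otimes> \<delta> \<otimes> \<iota>) \<odot> (\<sigma> \<otimes> \<iota>) \<odot> (\<iota> \<otimes> \<delta>)"
proof -
  have nat: "sy 2 1 \<odot> (\<delta> \<otimes> \<iota>) = (\<iota> \<otimes> \<delta>) \<odot> \<sigma>" using syN[of \<delta> \<iota>] by simp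
  have "(\<sigma> \<otimes> \<iota> \<otimes> \<iota>) \<odot> (\<iota> \<otimes> \<sigma> \<otimes> \<iota>) \<odot> (\<delta> \<otimes> \<delta>) = (sy 2 1 \<otimes> \<iota>) \<odot> (\<delta> \<otimes> \<delta>)"
    by (simp add: NR h21)
  also have "\<dots> = (sy 2 1 \<otimes> \<iota>) \<odot> ((\<delta> \<otimes> \<iota> \<otimes> \<iota>) \<odot> (\<iota> \<otimes> \<delta>))" by (simp add: NR)
  also have "\<dots> = ((sy 2 1 \<odot> (\<delta> \<otimes> \<iota>)) \<otimes> \<iota>) \<odot> (\<iota> \<otimes> \<delta>)"
    by (subst M2t) (simp_all add: idL)
  also have "\<dots> = (\<iota> \<otimes> \<delta> \<otimes> \<iota>) \<odot> (\<sigma> \<otimes> \<iota>) \<odot> (\<iota> \<otimes> \<delta>)"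
    by (simp add: nat NR)
  finally show ?thesis .
qed

lemma se: "(s \<otimes> \<epsilon>) \<odot> \<sigma> = \<epsilon> \<otimes> s"
  using syN[of \<epsilon> s] by (simp add: sy0 idL)

lemma ee: "\<epsilon> \<odot> (\<epsilon> \<otimes> \<iota>) = \<epsilon> \<otimes> \<epsilon>" using zl[of \<epsilon> \<epsilon>] by simp

lemma apE: "\<mu> \<odot> (\<epsilon> \<otimes> ((s \<otimes> \<iota>) \<odot> \<delta>)) = \<eta> \<odot> (\<epsilon> \<otimes> \<epsilon>)"
proof -
  have "\<mu> \<odot> (\<epsilon> \<otimes> ((s \<otimes> \<iota>) \<odot> \<delta>)) = (\<mu> \<odot> ((s \<otimes> \<iota>) \<odot> \<delta>)) \<odot> (\<epsilon> \<otimes> \<iota>)"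
    using zl[of \<epsilon> "(s \<otimes> \<iota>) \<odot> \<delta>"] by (simp add: cmpA)
  also have "\<dots> = \<eta> \<odot> (\<epsilon> \<otimes> \<epsilon>)" by (simp add: ap1 cmpA ee)
  finally show ?thesis .
qed

lemma e1: "(\<mu> \<odot> (s \<otimes> s) \<odot> \<sigma>) \<otimes> \<mu> = (\<mu> \<otimes> \<mu>) \<odot> (s \<otimes> s \<otimes> \<iota> \<otimes> \<iota>) \<odot> (\<sigma> \<otimes> \<iota> \<otimes> \<iota>)"
  by (simp add: NR)

lemma R: "wt x \<Longrightarrow> cd x = 3 \<Longrightarrow> \<mu> \<odot> (\<mu> \<otimes> \<mu>) \<odot> (s \<otimes> s \<otimes> \<iota> \<otimes> \<iota>) \<odot> (\<iota> \<otimes> \<delta> \<otimes> \<iota>) \<odot> x = \<mu> \<odot> (s \<otimes> \<epsilon> \<otimes> \<iota>) \<odot> x"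
  by (simp add: NR cx[OF mm] ap1 uL)

lemma c2: "conv Nn \<mu> = e2"
proof -
  have "conv Nn \<mu> = \<mu> \<odot> (\<mu> \<otimes> \<mu>) \<odot> (s \<otimes> s \<otimes> \<iota> \<otimes> \<iota>) \<odot> (\<sigma> \<otimes> \<iota> \<otimes> \<iota>) \<odot> (\<iota> \<otimes> \<sigma> \<otimes> \<iota>) \<odot> (\<delta> \<otimes> \<delta>)"
    by (simp add: conv_def Nn_def D2_def e1 cmpA)
  also have "\<dots> = \<mu> \<odot> (\<mu> \<otimes> \<mu>) \<odot> (s \<otimes> s \<otimes> \<iota> \<otimes> \<iota>) \<odot> (\<iota> \<otimes> \<delta> \<otimes> \<iota>) \<odot> (\<sigma> \<otimes> \<iota>) \<odot> (\<iota> \<otimes> \<delta>)"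
    by (simp only: P1)
  also have "\<dots> = \<mu> \<odot> (s \<otimes> \<epsilon> \<otimes> \<iota>) \<odot> (\<sigma> \<otimes> \<iota>) \<odot> (\<iota> \<otimes> \<delta>)"
    by (simp add: R)
  also have "\<dots> = e2" by (simp add: NR se apE e2_def)
  finally show ?thesis .
qed


lemma ie: "(\<iota> \<otimes> \<epsilon>) \<odot> \<sigma> = \<epsilon> \<otimes> \<iota>" using syN[of \<epsilon> \<iota>] by (simp add: sy0 idL)
lemma ei: "(\<epsilon> \<otimes> \<iota>) \<odot> \<sigma> = \<iota> \<otimes> \<epsilon>" using syN[of \<iota> \<epsilon>] by (simp add: sy0 idL)
lemma nat12: "(\<delta> \<otimes> \<iota>) \<odot> \<sigma> = sy 1 2 \<odot> (\<iota> \<otimes> \<delta>)" using syN[of \<iota> \<delta>] by simp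
lemma nat21: "(\<iota> \<otimes> \<delta>) \<odot> \<sigma> = sy 2 1 \<odot> (\<delta> \<otimes> \<iota>)" using syN[of \<delta> \<iota>] by simp

lemma uRt: "wt y \<Longrightarrow> wt b \<Longrightarrow> wt x \<Longrightarrow> cd y = 0 \<Longrightarrow> cd b = 1 \<Longrightarrow> cd x = dm b + dm y \<Longrightarrow> \<mu> \<odot> ((b \<otimes> (\<eta> \<odot> y)) \<odot> x) = (b \<otimes> y) \<odot> x"
  by (simp add: cmpA[symmetric] uR)
lemma uLt: "wt y \<Longrightarrow> wt b \<Longrightarrow> wt x \<Longrightarrow> cd y = 0 \<Longrightarrow> cd b = 1 \<Longrightarrow> cd x = dm y + dm b \<Longrightarrow> \<mu> \<odot> (((\<eta> \<odot> y) \<otimes> b) \<odot> x) = (y \<otimes> b) \<odot> x"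
  by (simp add: cmpA[symmetric] uL)

lemma conv_r: "wt f \<Longrightarrow> dm f = 2 \<Longrightarrow> cd f = 1 \<Longrightarrow> conv f e2 = f"
proof -
  assume a: "wt f" "dm f = 2" "cd f = 1"
  have "conv f e2 = (f \<otimes> (\<epsilon> \<otimes> \<epsilon>)) \<odot> D2" using a by (simp add: conv_def e2_def uRt)
  also have "\<dots> = f \<odot> (\<iota> \<otimes> \<iota> \<otimes> \<epsilon> \<otimes> \<epsilon>) \<odot> D2" using a zr[of "\<epsilon> \<otimes> \<epsilon>" f] by (simp add: cmpA idn2 tmA)
  also have "\<dots> = f" using a by (simp add: NR D2_def ie dU2)
  finally show ?thesis .
qed

lemma conv_l: "wt f \<Longrightarrow> dm f = 2 \<Longrightarrow> cd f = 1 \<Longrightarrow> conv e2 f = f"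
proof -
  assume a: "wt f" "dm f = 2" "cd f = 1"
  have "conv e2 f = ((\<epsilon> \<otimes> \<epsilon>) \<otimes> f) \<odot> D2" using a by (simp add: conv_def e2_def uLt)
  also have "\<dots> = f \<odot> (\<epsilon> \<otimes> \<epsilon> \<otimes> \<iota> \<otimes> \<iota>) \<odot> D2" using a zl[of "\<epsilon> \<otimes> \<epsilon>" f] by (simp add: cmpA idn2 tmA)
  also have "\<dots> = f" using a by (simp add: NR D2_def ei dU1)
  finally show ?thesis .
qed

lemma perm4: "(\<sigma> \<otimes> \<iota> \<otimes> \<iota> \<otimes> \<iota>) \<odot> (\<iota> \<otimes> ((\<iota> \<otimes> \<sigma>) \<odot> (\<sigma> \<otimes> \<iota>)) \<otimes> \<iota>) = (\<iota> \<otimes> \<iota> \<otimes> \<sigma> \<otimes> \<iota>) \<odot> (((\<sigma> \<otimes> \<iota>) \<odot> (\<iota> \<otimes> \<sigma>)) \<otimes> \<iota> \<otimes> \<iota>)"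
proof -
  have p1: "\<iota> \<otimes> ((\<iota> \<otimes> \<sigma>) \<odot> (\<sigma> \<otimes> \<iota>)) \<otimes> \<iota> = (\<iota> \<otimes> \<iota> \<otimes> \<sigma> \<otimes> \<iota>) \<odot> (\<iota> \<otimes> \<sigma> \<otimes> \<iota> \<otimes> \<iota>)" by (simp add: NR)
  have p2: "((\<sigma> \<otimes> \<iota>) \<odot> (\<iota> \<otimes> \<sigma>)) \<otimes> \<iota> \<otimes> \<iota> = (\<sigma> \<otimes> \<iota> \<otimes> \<iota> \<otimes> \<iota>) \<odot> (\<iota> \<otimes> \<sigma> \<otimes> \<iota> \<otimes> \<iota>)" by (simp add: NR)
  have p3: "(\<sigma> \<otimes> \<iota> \<otimes> \<iota> \<otimes> \<iota>) \<odot> (\<iota> \<otimes> \<iota> \<otimes> \<sigma> \<otimes> \<iota>) = (\<iota> \<otimes> \<iota> \<otimes> \<sigma> \<otimes> \<iota>) \<odot> (\<sigma> \<otimes> \<iota> \<otimes> \<iota> \<otimes> \<iota>)" by (simp add: NR)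
  show ?thesis unfolding p1 p2
    by (simp add: cmpA[symmetric] p3 del: idn2)
qed

lemma perm: "(\<iota> \<otimes> \<sigma> \<otimes> \<iota> \<otimes> \<iota> \<otimes> \<iota>) \<odot> (\<iota> \<otimes> \<iota> \<otimes> sy 1 2 \<otimes> \<iota>) = (\<iota> \<otimes> \<iota> \<otimes> \<iota> \<otimes> \<sigma> \<otimes> \<iota>) \<odot> (\<iota> \<otimes> sy 2 1 \<otimes> \<iota> \<otimes> \<iota>)"
  by (simp add: NR h12 h21 perm4)

definition "d3 = (\<iota> \<otimes> \<delta>) \<odot> \<delta>"
lemma wt_d3[simp]: "wt d3" "dm d3 = 1" "cd d3 = 3" by (simp_all add: d3_def)

lemma D2L: "(D2 \<otimes> \<iota> \<otimes> \<iota>) \<odot> D2 = (\<iota> \<otimes> \<sigma> \<otimes> \<iota> \<otimes> \<iota> \<otimes> \<iota>) \<odot> (\<iota> \<otimes> \<iota> \<otimes> sy 1 2 \<otimes> \<iota>) \<odot> (d3 \<otimes> d3)"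
proof -
  have x1: "((\<iota> \<otimes> \<sigma> \<otimes> \<iota>) \<odot> (\<delta> \<otimes> \<delta>)) \<otimes> \<iota> \<otimes> \<iota> = (\<iota> \<otimes> \<sigma> \<otimes> \<iota> \<otimes> \<iota> \<otimes> \<iota>) \<odot> (\<delta> \<otimes> \<delta> \<otimes> \<iota> \<otimes> \<iota>)"
    using xch[of "\<delta> \<otimes> \<delta>" "\<iota> \<otimes> \<sigma> \<otimes> \<iota>" "\<iota> \<otimes> \<iota>" "\<iota> \<otimes> \<iota>"] by (simp add: NA)
  have l2: "(\<delta> \<otimes> \<delta> \<otimes> \<iota> \<otimes> \<iota>) \<odot> (\<iota> \<otimes> \<sigma> \<otimes> \<iota>) \<odot> (\<delta> \<otimes> \<delta>) = (\<delta> \<otimes> ((\<delta> \<otimes> \<iota>) \<odot> \<sigma>) \<otimes> \<iota>) \<odot> (\<delta> \<otimes> \<delta>)"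
    by (simp add: NR)
  have l4: "\<delta> \<otimes> (sy 1 2 \<odot> (\<iota> \<otimes> \<delta>)) \<otimes> \<iota> = (\<iota> \<otimes> \<iota> \<otimes> sy 1 2 \<otimes> \<iota>) \<odot> (\<delta> \<otimes> \<iota> \<otimes> \<delta> \<otimes> \<iota>)"
    by (simp add: NR)
  have l5: "(\<delta> \<otimes> \<iota> \<otimes> \<delta> \<otimes> \<iota>) \<odot> (\<delta> \<otimes> \<delta>) = d3 \<otimes> d3" by (simp add: NR dA d3_def)
  have "(D2 \<otimes> \<iota> \<otimes> \<iota>) \<odot> D2 = (\<iota> \<otimes> \<sigma> \<otimes> \<iota> \<otimes> \<iota> \<otimes> \<iota>) \<odot> (\<delta> \<otimes> \<delta> \<otimes> \<iota> \<otimes> \<iota>) \<odot> (\<iota> \<otimes> \<sigma> \<otimes> \<iota>) \<odot> (\<delta> \<otimes> \<delta>)"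
    unfolding D2_def by (simp only: x1; simp add: cmpA)
  also have "\<dots> = (\<iota> \<otimes> \<sigma> \<otimes> \<iota> \<otimes> \<iota> \<otimes> \<iota>) \<odot> (\<delta> \<otimes> (sy 1 2 \<odot> (\<iota> \<otimes> \<delta>)) \<otimes> \<iota>) \<odot> (\<delta> \<otimes> \<delta>)"
    by (simp only: l2 nat12)
  also have "\<dots> = (\<iota> \<otimes> \<sigma> \<otimes> \<iota> \<otimes> \<iota> \<otimes> \<iota>) \<odot> (\<iota> \<otimes> \<iota> \<otimes> sy 1 2 \<otimes> \<iota>) \<odot> (\<delta> \<otimes> \<iota> \<otimes> \<delta> \<otimes> \<iota>) \<odot> (\<delta> \<otimes> \<delta>)"
    by (simp only: l4; simp add: cmpA)
  also have "\<dots> = (\<iota> \<otimes> \<sigma> \<otimes> \<iota> \<otimes> \<iota> \<otimes> \<iota>) \<odot> (\<iota> \<otimes> \<iota> \<otimes> sy 1 2 \<otimes> \<iota>) \<odot> (d3 \<otimes> d3)"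
    by (simp only: l5)
  finally show ?thesis .
qed

lemma D2R: "(\<iota> \<otimes> \<iota> \<otimes> D2) \<odot> D2 = (\<iota> \<otimes> \<iota> \<otimes> \<iota> \<otimes> \<sigma> \<otimes> \<iota>) \<odot> (\<iota> \<otimes> sy 2 1 \<otimes> \<iota> \<otimes> \<iota>) \<odot> (d3 \<otimes> d3)"
proof -
  have x1: "\<iota> \<otimes> \<iota> \<otimes> ((\<iota> \<otimes> \<sigma> \<otimes> \<iota>) \<odot> (\<delta> \<otimes> \<delta>)) = (\<iota> \<otimes> \<iota> \<otimes> \<iota> \<otimes> \<sigma> \<otimes> \<iota>) \<odot> (\<iota> \<otimes> \<iota> \<otimes> \<delta> \<otimes> \<delta>)"
    by (simp add: NR)
  have l2: "(\<iota> \<otimes> \<iota> \<otimes> \<delta> \<otimes> \<delta>) \<odot> (\<iota> \<otimes> \<sigma> \<otimes> \<iota>) = \<iota> \<otimes> ((\<iota> \<otimes> \<delta>) \<odot> \<sigma>) \<otimes> \<delta>"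
    by (simp add: NR)
  have l4: "\<iota> \<otimes> (sy 2 1 \<odot> (\<delta> \<otimes> \<iota>)) \<otimes> \<delta> = (\<iota> \<otimes> sy 2 1 \<otimes> \<iota> \<otimes> \<iota>) \<odot> (\<iota> \<otimes> \<delta> \<otimes> \<iota> \<otimes> \<delta>)"
    by (simp add: NR)
  have l5: "(\<iota> \<otimes> \<delta> \<otimes> \<iota> \<otimes> \<delta>) \<odot> (\<delta> \<otimes> \<delta>) = d3 \<otimes> d3" by (simp add: NR d3_def)
  have "(\<iota> \<otimes> \<iota> \<otimes> D2) \<odot> D2 = (\<iota> \<otimes> \<iota> \<otimes> \<iota> \<otimes> \<sigma> \<otimes> \<iota>) \<odot> ((\<iota> \<otimes> \<iota> \<otimes> \<delta> \<otimes> \<delta>) \<odot> (\<iota> \<otimes> \<sigma> \<otimes> \<iota>)) \<odot> (\<delta> \<otimes> \<delta>)"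
    unfolding D2_def by (simp only: x1; simp add: cmpA)
  also have "\<dots> = (\<iota> \<otimes> \<iota> \<otimes> \<iota> \<otimes> \<sigma> \<otimes> \<iota>) \<odot> (\<iota> \<otimes> (sy 2 1 \<odot> (\<delta> \<otimes> \<iota>)) \<otimes> \<delta>) \<odot> (\<delta> \<otimes> \<delta>)"
    by (simp only: l2 nat21)
  also have "\<dots> = (\<iota> \<otimes> \<iota> \<otimes> \<iota> \<otimes> \<sigma> \<otimes> \<iota>) \<odot> (\<iota> \<otimes> sy 2 1 \<otimes> \<iota> \<otimes> \<iota>) \<odot> (\<iota> \<otimes> \<delta> \<otimes> \<iota> \<otimes> \<delta>) \<odot> (\<delta> \<otimes> \<delta>)"
    by (simp only: l4; simp add: cmpA)
  also have "\<dots> = (\<iota> \<otimes> \<iota> \<otimes> \<iota> \<otimes> \<sigma> \<otimes> \<iota>) \<odot> (\<iota> \<otimes> sy 2 1 \<otimes> \<iota> \<otimes> \<iota>) \<odot> (d3 \<otimes> d3)"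
    by (simp only: l5)
  finally show ?thesis .
qed

lemma D2co: "(D2 \<otimes> \<iota> \<otimes> \<iota>) \<odot> D2 = (\<iota> \<otimes> \<iota> \<otimes> D2) \<odot> D2"
  unfolding D2L D2R by (simp add: cmpA[symmetric] perm)


lemma conv_assoc: "wt f \<Longrightarrow> wt g \<Longrightarrow> wt h \<Longrightarrow> dm f = 2 \<Longrightarrow> dm g = 2 \<Longrightarrow> dm h = 2 \<Longrightarrow> cd f = 1 \<Longrightarrow> cd g = 1 \<Longrightarrow> cd h = 1 \<Longrightarrow>
  conv (conv f g) h = conv f (conv g h)"
proof -
  assume a: "wt f" "wt g" "wt h" "dm f = 2" "dm g = 2" "dm h = 2" "cd f = 1" "cd g = 1" "cd h = 1"
  have "conv (conv f g) h = (\<mu> \<odot> (\<mu> \<otimes> \<iota>)) \<odot> ((f \<otimes> g \<otimes> h) \<odot> ((D2 \<otimes> \<iota> \<otimes> \<iota>) \<odot> D2))"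
    using a by (simp add: NR conv_def)
  also have "\<dots> = (\<mu> \<odot> (\<iota> \<otimes> \<mu>)) \<odot> ((f \<otimes> g \<otimes> h) \<odot> ((\<iota> \<otimes> \<iota> \<otimes> D2) \<odot> D2))"
    by (simp only: mA D2co)
  also have "\<dots> = conv f (conv g h)" using a by (simp add: NR conv_def)
  finally show ?thesis .
qed

lemma antimult: "Nn = s \<odot> \<mu>"
proof -
  have "Nn = conv Nn e2" by (simp add: conv_r)
  also have "\<dots> = conv Nn (conv \<mu> (s \<odot> \<mu>))" by (simp add: c1)
  also have "\<dots> = conv (conv Nn \<mu>) (s \<odot> \<mu>)" by (simp add: conv_assoc)
  also have "\<dots> = s \<odot> \<mu>" by (simp add: c2 conv_l)
  finally show ?thesis .
qed

lemma antimult_raw: "Cmp C S m = Cmp C m (Cmp C (Tm C S S) (Sy C H H))"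
  using arg_cong[OF antimult, of mr] by (simp add: Nn_def)

end


definition opC :: "('o,'m) smcat \<Rightarrow> ('o,'m) smcat" where
  "opC C = C\<lparr>Hom := (\<lambda>A B. Hom C B A), Cmp := (\<lambda>g f. Cmp C f g), Sy := (\<lambda>A B. Sy C B A)\<rparr>"

lemma opC_simps[simp]: "Obj (opC C) = Obj C" "Hom (opC C) A B = Hom C B A" "Cmp (opC C) g f = Cmp C f g"
  "Idm (opC C) = Idm C" "Tob (opC C) = Tob C" "Tm (opC C) = Tm C" "Uob (opC C) = Uob C" "Sy (opC C) A B = Sy C B A"
  by (simp_all add: opC_def)

context smc begin
lemma op_smc: "strict_symmetric_monoidal_cat (opC C)"
  unfolding strict_symmetric_monoidal_cat_def opC_simps
proof (intro conjI)
  show "\<forall>A B f. f \<in> Hom C B A \<longrightarrow> A \<in> Obj C \<and> B \<in> Obj C" using hom_obj by blast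
  show "\<forall>A\<in>Obj C. Idm C A \<in> Hom C A A" using id_hom by blast
  show "\<forall>A B D f g. f \<in> Hom C B A \<longrightarrow> g \<in> Hom C D B \<longrightarrow> Cmp C f g \<in> Hom C D A" using cmp_hom by blast
  show "\<forall>A B f. f \<in> Hom C B A \<longrightarrow> Cmp C f (Idm C B) = f \<and> Cmp C (Idm C A) f = f" using id_l id_r by blast
  show "\<forall>A B D E f g h. f \<in> Hom C B A \<longrightarrow> g \<in> Hom C D B \<longrightarrow> h \<in> Hom C E D \<longrightarrow>
        Cmp C (Cmp C f g) h = Cmp C f (Cmp C g h)" using cmp_assoc by metis
  show "Uob C \<in> Obj C" by (rule U_obj)
  show "\<forall>A\<in>Obj C. \<forall>B\<in>Obj C. Tob C A B \<in> Obj C" using tob_obj by blast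
  show "\<forall>A B D E f g. f \<in> Hom C B A \<longrightarrow> g \<in> Hom C E D \<longrightarrow> Tm C f g \<in> Hom C (Tob C B E) (Tob C A D)"
    using tm_hom by blast
  show "\<forall>A\<in>Obj C. \<forall>B\<in>Obj C. Tm C (Idm C A) (Idm C B) = Idm C (Tob C A B)" using tm_id by blast
  show "\<forall>A B D A' B' D' f g f' g'. f \<in> Hom C B A \<longrightarrow> g \<in> Hom C D B \<longrightarrow> f' \<in> Hom C B' A' \<longrightarrow> g' \<in> Hom C D' B' \<longrightarrow>
        Tm C (Cmp C f g) (Cmp C f' g') = Cmp C (Tm C f f') (Tm C g g')" using interchange by metis
  show "\<forall>A\<in>Obj C. \<forall>B\<in>Obj C. \<forall>D\<in>Obj C. Tob C (Tob C A B) D = Tob C A (Tob C B D)" using tob_assoc by blast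
  show "\<forall>A B D E F G f g h. f \<in> Hom C B A \<longrightarrow> g \<in> Hom C E D \<longrightarrow> h \<in> Hom C G F \<longrightarrow>
        Tm C (Tm C f g) h = Tm C f (Tm C g h)" using tm_assoc by metis
  show "\<forall>A\<in>Obj C. Tob C (Uob C) A = A \<and> Tob C A (Uob C) = A" using tob_unitl tob_unitr by blast
  show "\<forall>A B f. f \<in> Hom C B A \<longrightarrow> Tm C (Idm C (Uob C)) f = f \<and> Tm C f (Idm C (Uob C)) = f" using tm_unitl tm_unitr by blast
  show "\<forall>A\<in>Obj C. \<forall>B\<in>Obj C. Sy C B A \<in> Hom C (Tob C B A) (Tob C A B)" using sy_hom by blast
  show "\<forall>A B D E f g. f \<in> Hom C B A \<longrightarrow> g \<in> Hom C E D \<longrightarrow>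
        Cmp C (Tm C f g) (Sy C E B) = Cmp C (Sy C D A) (Tm C g f)" using sy_nat by metis
  show "\<forall>A\<in>Obj C. \<forall>B\<in>Obj C. Cmp C (Sy C B A) (Sy C A B) = Idm C (Tob C A B)" using sy_inv by blast
  show "\<forall>A\<in>Obj C. \<forall>B\<in>Obj C. \<forall>D\<in>Obj C.
        Sy C (Tob C B D) A = Cmp C (Tm C (Sy C B A) (Idm C D)) (Tm C (Idm C B) (Sy C D A))" using sy_hex2 by blast
qed
end

context hopfH begin

lemma op_hopf: "hopfH (opC C) H d e m u S"
proof -
  have h: "hopf_algebra_in C H m u d e S" by (rule hopf)
  note hd' = h[unfolded hopf_algebra_in_def algebra_in_def coalgebra_in_def]
  have H2: "Tob C H H \<in> Obj C" using H by (simp add: tob_obj)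
  have dd: "d \<in> Hom C H (Tob C H H)" using hd' by blast
  have mm: "m \<in> Hom C (Tob C H H) H" using hd' by blast
  have SS: "S \<in> Hom C H H" using hd' by blast
  have i: "Idm C H \<in> Hom C H H" using H by (rule id_hom)
  have sw: "Tm C (Idm C H) (Tm C (Sy C H H) (Idm C H)) \<in> Hom C (Tob C H (Tob C H (Tob C H H))) (Tob C H (Tob C H (Tob C H H)))"
    using tm_hom[OF i tm_hom[OF sy_hom[OF H H] i]] H by (simp add: tob_assoc)
  have dd2: "Tm C d d \<in> Hom C (Tob C H H) (Tob C H (Tob C H (Tob C H H)))"
    using tm_hom[OF dd dd] H by (simp add: tob_assoc tob_obj)
  have mm2: "Tm C m m \<in> Hom C (Tob C H (Tob C H (Tob C H H))) (Tob C H H)"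
    using tm_hom[OF mm mm] H by (simp add: tob_assoc tob_obj)
  have a1: "Cmp C (Cmp C (Tm C m m) (Tm C (Idm C H) (Tm C (Sy C H H) (Idm C H)))) (Tm C d d)
     = Cmp C (Tm C m m) (Cmp C (Tm C (Idm C H) (Tm C (Sy C H H) (Idm C H))) (Tm C d d))"
    using cmp_assoc[OF dd2 sw mm2] by simp
  have a2: "Cmp C (Cmp C m (Tm C S (Idm C H))) d = Cmp C m (Cmp C (Tm C S (Idm C H)) d)"
    using cmp_assoc[OF dd _ mm] tm_hom[OF SS i] by simp
  have a3: "Cmp C (Cmp C m (Tm C (Idm C H) S)) d = Cmp C m (Cmp C (Tm C (Idm C H) S) d)"
    using cmp_assoc[OF dd _ mm] tm_hom[OF i SS] by simp
  show ?thesis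
    unfolding hopfH_def hopfH_axioms_def smcH_def smcH_axioms_def smc_def
    using op_smc H hd' a1 a2 a3
    unfolding hopf_algebra_in_def algebra_in_def coalgebra_in_def opC_simps
    by metis
qed

lemma anticomult_raw: "Cmp C d S = Cmp C (Cmp C (Sy C H H) (Tm C S S)) d"
  using hopfH.antimult_raw[OF op_hopf] by simp

end


context hopfH begin
lemma antimult': "s \<odot> \<mu> = \<mu> \<odot> (s \<otimes> s) \<odot> \<sigma>" using antimult by (simp add: Nn_def)
lemma anticomult: "\<delta> \<odot> s = \<sigma> \<odot> (s \<otimes> s) \<odot> \<delta>"
proof -
  have "\<delta> \<odot> s = (\<sigma> \<odot> (s \<otimes> s)) \<odot> \<delta>" by (rule arr_eq) (simp_all add: anticomult_raw)
  then show ?thesis by (simp add: cmpA)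
qed
end

locale ihopf = hopfH C H m u d e S for C :: "('o,'m) smcat" and H m u d e S +
  fixes Si L l
  assumes Si: "Si \<in> Hom C H H" "Cmp C S Si = Idm C H" "Cmp C Si S = Idm C H"
  and Lint: "left_integral C H m e L" and lco: "right_cointegral C H u d l"
  and nrm: "Cmp C l L = Idm C (Uob C)"
begin

abbreviation "si \<equiv> at 1 Si 1"
abbreviation "Lt \<equiv> at 0 L 1"
abbreviation "lt \<equiv> at 1 l 0"

lemma wt_at2[simp]: "wt si" "wt Lt" "wt lt"
  using Si Lint lco by (simp_all add: wt_at left_integral_def right_cointegral_def)

lemma ssi: "s \<odot> si = \<iota>" by (rule arr_eq) (simp_all add: Si)
lemma sis: "si \<odot> s = \<iota>" by (rule arr_eq) (simp_all add: Si)
lemma intg: "\<mu> \<odot> (\<iota> \<otimes> Lt) = Lt \<odot> \<epsilon>" by (rule arr_eq) (use Lint in \<open>simp_all add: left_integral_def\<close>)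
lemma coint: "(lt \<otimes> \<iota>) \<odot> \<delta> = \<eta> \<odot> lt" by (rule arr_eq) (use lco in \<open>simp_all add: right_cointegral_def\<close>)
lemma nrm': "lt \<odot> Lt = idn 0" by (rule arr_eq) (simp_all add: nrm)

definition "E = \<delta> \<odot> Lt"
definition "P = (\<iota> \<otimes> s) \<odot> E"
definition "Df = (\<mu> \<otimes> s) \<odot> (\<iota> \<otimes> E)"
lemma wt_E[simp]: "wt E" "dm E = 0" "cd E = 2" by (simp_all add: E_def)
lemma wt_P[simp]: "wt P" "dm P = 0" "cd P = 2" by (simp_all add: P_def)
lemma wt_Df[simp]: "wt Df" "dm Df = 1" "cd Df = 2" by (simp_all add: Df_def)

lemma Dform: "Df = (\<mu> \<otimes> \<iota>) \<odot> (\<iota> \<otimes> P)"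
proof -
  have "\<iota> \<otimes> P = (\<iota> \<otimes> \<iota> \<otimes> s) \<odot> (\<iota> \<otimes> E)" unfolding P_def by (simp add: NR)
  then have "(\<mu> \<otimes> \<iota>) \<odot> (\<iota> \<otimes> P) = (\<mu> \<otimes> \<iota>) \<odot> ((\<iota> \<otimes> \<iota> \<otimes> s) \<odot> (\<iota> \<otimes> E))" by simp
  also have "\<dots> = ((\<mu> \<odot> (\<iota> \<otimes> \<iota>)) \<otimes> (\<iota> \<odot> s)) \<odot> (\<iota> \<otimes> E)" by (subst M2t) simp_all
  also have "\<dots> = Df" by (simp add: Df_def NR)
  finally show ?thesis by simp
qed

lemma F1: "(\<mu> \<otimes> \<iota>) \<odot> (\<iota> \<otimes> Df) = Df \<odot> \<mu>"
proof -
  have "(\<mu> \<otimes> \<iota>) \<odot> (\<iota> \<otimes> Df) = (\<mu> \<otimes> \<iota>) \<odot> ((\<iota> \<otimes> \<mu> \<otimes> \<iota>) \<odot> (\<iota> \<otimes> \<iota> \<otimes> P))"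
    unfolding Dform by (simp add: NR)
  also have "\<dots> = ((\<mu> \<odot> (\<iota> \<otimes> \<mu>)) \<otimes> \<iota>) \<odot> (\<iota> \<otimes> \<iota> \<otimes> P)"
    by (subst M2t) (simp_all add: idL)
  also have "\<dots> = ((\<mu> \<odot> (\<mu> \<otimes> \<iota>)) \<otimes> \<iota>) \<odot> (\<iota> \<otimes> \<iota> \<otimes> P)" by (simp only: mA)
  also have "\<dots> = (\<mu> \<otimes> \<iota>) \<odot> ((\<mu> \<otimes> \<iota> \<otimes> \<iota>) \<odot> (\<iota> \<otimes> \<iota> \<otimes> P))"
    by (subst M2t) (simp_all add: idL)
  also have "(\<mu> \<otimes> \<iota> \<otimes> \<iota>) \<odot> (\<iota> \<otimes> \<iota> \<otimes> P) = (\<iota> \<otimes> P) \<odot> \<mu>"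
    using sp1[of \<mu> P] sp2[of \<mu> P] by (simp add: tmU2 idn2 tmA)
  also have "(\<mu> \<otimes> \<iota>) \<odot> ((\<iota> \<otimes> P) \<odot> \<mu>) = Df \<odot> \<mu>" by (simp add: Dform cmpA)
  finally show ?thesis .
qed

lemma ext3: "\<mu> \<odot> (Df \<odot> \<eta>) = \<eta> \<odot> (\<epsilon> \<odot> Lt)"
proof -
  have a: "(\<iota> \<otimes> E) \<odot> \<eta> = (\<eta> \<otimes> \<iota> \<otimes> \<iota>) \<odot> E" using sp1[of \<eta> E] sp2[of \<eta> E] by (simp add: tmU1 tmU2 idn2 tmA)
  have "Df \<odot> \<eta> = P" by (simp add: Df_def P_def cmpA a NR mU1)
  then show ?thesis by (simp add: P_def E_def cx3[OF ap2] cmpA)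
qed


lemma IB: "(\<mu> \<otimes> \<mu>) \<odot> (\<iota> \<otimes> \<sigma> \<otimes> \<iota>) \<odot> (\<delta> \<otimes> E) = E \<odot> \<epsilon>"
proof -
  have "\<delta> \<odot> (\<mu> \<odot> (\<iota> \<otimes> Lt)) = \<delta> \<odot> (Lt \<odot> \<epsilon>)" using intg by simp
  then show ?thesis unfolding E_def by (simp add: cx[OF bi] D2_def NR)
qed

definition "G = (\<iota> \<otimes> s) \<odot> (\<mu> \<otimes> \<mu>) \<odot> (\<iota> \<otimes> \<sigma> \<otimes> \<iota>)"
definition "Y = \<mu> \<odot> (s \<otimes> (\<mu> \<odot> (s \<otimes> \<iota>)))"
lemma wt_G[simp]: "wt G" "dm G = 4" "cd G = 2" by (simp_all add: G_def)
lemma wt_Y[simp]: "wt Y" "dm Y = 3" "cd Y = 1" by (simp_all add: Y_def)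

lemma K1: "((G \<odot> (\<delta> \<otimes> E)) \<otimes> \<iota>) \<odot> \<delta> = (G \<otimes> \<iota>) \<odot> (\<delta> \<otimes> E \<otimes> \<iota>) \<odot> \<delta>"
  using xl[of "\<delta> \<otimes> E" G 1] by (simp add: tmA cmpA)

lemma K2a: "\<mu> \<odot> ((\<mu> \<odot> (s \<otimes> s) \<odot> \<sigma>) \<otimes> \<iota>) = Y \<odot> (\<sigma> \<otimes> \<iota>)"
proof -
  have "\<mu> \<odot> ((\<mu> \<odot> (s \<otimes> s) \<odot> \<sigma>) \<otimes> \<iota>) = (\<mu> \<odot> (\<mu> \<otimes> \<iota>)) \<odot> (((s \<otimes> s) \<odot> \<sigma>) \<otimes> \<iota>)"
    by (simp add: NR)
  also have "\<dots> = (\<mu> \<odot> (\<iota> \<otimes> \<mu>)) \<odot> (((s \<otimes> s) \<odot> \<sigma>) \<otimes> \<iota>)" by (simp only: mA)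
  also have "((s \<otimes> s) \<odot> \<sigma>) \<otimes> \<iota> = (s \<otimes> s \<otimes> \<iota>) \<odot> (\<sigma> \<otimes> \<iota>)"
    using xl[of \<sigma> "s \<otimes> s" 1] by (simp add: tmA)
  also have "(\<mu> \<odot> (\<iota> \<otimes> \<mu>)) \<odot> ((s \<otimes> s \<otimes> \<iota>) \<odot> (\<sigma> \<otimes> \<iota>)) = Y \<odot> (\<sigma> \<otimes> \<iota>)"
  proof -
    have q: "(\<iota> \<otimes> \<mu>) \<odot> (s \<otimes> s \<otimes> \<iota>) = s \<otimes> (\<mu> \<odot> (s \<otimes> \<iota>))" by (simp add: NR)
    have qt: "(\<iota> \<otimes> \<mu>) \<odot> ((s \<otimes> s \<otimes> \<iota>) \<odot> (\<sigma> \<otimes> \<iota>)) = (s \<otimes> (\<mu> \<odot> (s \<otimes> \<iota>))) \<odot> (\<sigma> \<otimes> \<iota>)"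
      by (simp add: cmpA[symmetric] q)
    show ?thesis by (simp add: cmpA Y_def qt)
  qed
  finally show ?thesis .
qed

lemma K2: "(\<iota> \<otimes> \<mu>) \<odot> (G \<otimes> \<iota>) = (\<mu> \<otimes> Y) \<odot> (\<iota> \<otimes> sy 1 2 \<otimes> \<iota>)"
proof -
  have g: "G = (\<mu> \<otimes> (\<mu> \<odot> (s \<otimes> s) \<odot> \<sigma>)) \<odot> (\<iota> \<otimes> \<sigma> \<otimes> \<iota>)"
    by (simp add: G_def NR antimult')
  have "G \<otimes> \<iota> = (\<mu> \<otimes> (\<mu> \<odot> (s \<otimes> s) \<odot> \<sigma>) \<otimes> \<iota>) \<odot> (\<iota> \<otimes> \<sigma> \<otimes> \<iota> \<otimes> \<iota>)"
    unfolding g using xl[of "\<iota> \<otimes> \<sigma> \<otimes> \<iota>" "\<mu> \<otimes> (\<mu> \<odot> (s \<otimes> s) \<odot> \<sigma>)" 1] by (simp add: tmA)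
  then have "(\<iota> \<otimes> \<mu>) \<odot> (G \<otimes> \<iota>) = (\<mu> \<otimes> (\<mu> \<odot> ((\<mu> \<odot> (s \<otimes> s) \<odot> \<sigma>) \<otimes> \<iota>))) \<odot> (\<iota> \<otimes> \<sigma> \<otimes> \<iota> \<otimes> \<iota>)"
    by (simp add: NR)
  also have "\<dots> = (\<mu> \<otimes> (Y \<odot> (\<sigma> \<otimes> \<iota>))) \<odot> (\<iota> \<otimes> \<sigma> \<otimes> \<iota> \<otimes> \<iota>)" by (simp only: K2a)
  also have "\<dots> = (\<mu> \<otimes> Y) \<odot> (\<iota> \<otimes> sy 1 2 \<otimes> \<iota>)"
  proof -
    have r1: "\<mu> \<otimes> (Y \<odot> (\<sigma> \<otimes> \<iota>)) = (\<mu> \<otimes> Y) \<odot> (\<iota> \<otimes> \<iota> \<otimes> \<sigma> \<otimes> \<iota>)" by (simp add: NR)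
    have r2: "(\<iota> \<otimes> \<iota> \<otimes> \<sigma> \<otimes> \<iota>) \<odot> (\<iota> \<otimes> \<sigma> \<otimes> \<iota> \<otimes> \<iota>) = \<iota> \<otimes> ((\<iota> \<otimes> \<sigma>) \<odot> (\<sigma> \<otimes> \<iota>)) \<otimes> \<iota>" by (simp add: NR)
    show ?thesis by (simp add: r1 h12 cmpA r2 del: idn2)
  qed
  finally show ?thesis .
qed

lemma K3: "(\<iota> \<otimes> sy 1 2 \<otimes> \<iota>) \<odot> (\<delta> \<otimes> E \<otimes> \<iota>) = (\<iota> \<otimes> E \<otimes> \<iota> \<otimes> \<iota>) \<odot> (\<delta> \<otimes> \<iota>)"
proof -
  have n: "sy 1 2 \<odot> (\<iota> \<otimes> E) = E \<otimes> \<iota>" using syN[of \<iota> E] by (simp add: sy0 idR)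
  have a: "\<delta> \<otimes> E = (\<iota> \<otimes> \<iota> \<otimes> E) \<odot> \<delta>" using sp2[of \<delta> E] by (simp add: tmU2 idn2 tmA)
  have b: "(\<iota> \<otimes> sy 1 2) \<odot> (\<iota> \<otimes> \<iota> \<otimes> E) = \<iota> \<otimes> E \<otimes> \<iota>" by (simp add: NR n)
  have "(\<iota> \<otimes> sy 1 2 \<otimes> \<iota>) \<odot> (\<delta> \<otimes> E \<otimes> \<iota>) = ((\<iota> \<otimes> sy 1 2) \<odot> (\<delta> \<otimes> E)) \<otimes> \<iota>"
    by (simp add: NR)
  also have "\<dots> = (((\<iota> \<otimes> sy 1 2) \<odot> (\<iota> \<otimes> \<iota> \<otimes> E)) \<odot> \<delta>) \<otimes> \<iota>" by (simp add: a cmpA)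
  also have "\<dots> = ((\<iota> \<otimes> E \<otimes> \<iota>) \<odot> \<delta>) \<otimes> \<iota>" by (simp only: b)
  also have "\<dots> = (\<iota> \<otimes> E \<otimes> \<iota> \<otimes> \<iota>) \<odot> (\<delta> \<otimes> \<iota>)" using xl[of \<delta> "\<iota> \<otimes> E \<otimes> \<iota>" 1] by (simp add: tmA)
  finally show ?thesis .
qed

lemma K5: "(\<mu> \<otimes> Y) \<odot> (\<iota> \<otimes> E \<otimes> \<iota> \<otimes> \<iota>) \<odot> (\<iota> \<otimes> \<delta>) \<odot> \<delta> = Df"
proof -
  have a: "(E \<otimes> \<iota> \<otimes> \<iota>) \<odot> \<delta> = (\<iota> \<otimes> \<iota> \<otimes> \<delta>) \<odot> (E \<otimes> \<iota>)"
    using sp1[of E \<delta>] sp2[of E \<delta>] by (simp add: tmU1 idn2 tmA)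
  have b: "(\<iota> \<otimes> E \<otimes> \<iota> \<otimes> \<iota>) \<odot> (\<iota> \<otimes> \<delta>) = (\<iota> \<otimes> \<iota> \<otimes> \<iota> \<otimes> \<delta>) \<odot> (\<iota> \<otimes> E \<otimes> \<iota>)"
  proof -
    have "(\<iota> \<otimes> E \<otimes> \<iota> \<otimes> \<iota>) \<odot> (\<iota> \<otimes> \<delta>) = \<iota> \<otimes> ((E \<otimes> \<iota> \<otimes> \<iota>) \<odot> \<delta>)" by (simp add: NR)
    also have "\<dots> = \<iota> \<otimes> ((\<iota> \<otimes> \<iota> \<otimes> \<delta>) \<odot> (E \<otimes> \<iota>))" by (simp only: a)
    also have "\<dots> = (\<iota> \<otimes> \<iota> \<otimes> \<iota> \<otimes> \<delta>) \<odot> (\<iota> \<otimes> E \<otimes> \<iota>)" by (simp add: NR)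
    finally show ?thesis .
  qed
  have c: "(\<mu> \<otimes> Y) \<odot> (\<iota> \<otimes> \<iota> \<otimes> \<iota> \<otimes> \<delta>) = \<mu> \<otimes> (s \<otimes> \<epsilon>)"
    by (simp add: NR Y_def ap1 uR)
  have "(\<mu> \<otimes> Y) \<odot> (\<iota> \<otimes> E \<otimes> \<iota> \<otimes> \<iota>) \<odot> (\<iota> \<otimes> \<delta>) \<odot> \<delta> = ((\<mu> \<otimes> Y) \<odot> (\<iota> \<otimes> \<iota> \<otimes> \<iota> \<otimes> \<delta>)) \<odot> (\<iota> \<otimes> E \<otimes> \<iota>) \<odot> \<delta>"
    by (simp add: cmpA[symmetric] b del: idn2)
  also have "\<dots> = (\<mu> \<otimes> s \<otimes> \<epsilon>) \<odot> (\<iota> \<otimes> E \<otimes> \<iota>) \<odot> \<delta>" by (simp only: c)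
  also have "\<dots> = (Df \<otimes> \<epsilon>) \<odot> \<delta>" by (simp add: NR Df_def)
  also have "\<dots> = Df" using zr[of \<epsilon> Df] by (simp add: cmpA dU2 idR)
  finally show ?thesis .
qed

lemma F2': "(\<iota> \<otimes> \<mu>) \<odot> (P \<otimes> \<iota>) = Df"
proof -
  have i: "(P \<otimes> \<iota>) \<odot> ((\<epsilon> \<otimes> \<iota>) \<odot> \<delta>) = ((P \<odot> \<epsilon>) \<otimes> \<iota>) \<odot> \<delta>"
    by (subst M0t) (simp_all add: idL)
  have pe: "P \<odot> \<epsilon> = G \<odot> (\<delta> \<otimes> E)" unfolding P_def G_def by (simp add: cmpA IB[symmetric])
  have "(\<iota> \<otimes> \<mu>) \<odot> (P \<otimes> \<iota>) = (\<iota> \<otimes> \<mu>) \<odot> ((P \<otimes> \<iota>) \<odot> ((\<epsilon> \<otimes> \<iota>) \<odot> \<delta>))" by (simp add: dU1 idR)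
  also have "\<dots> = (\<iota> \<otimes> \<mu>) \<odot> (((G \<odot> (\<delta> \<otimes> E)) \<otimes> \<iota>) \<odot> \<delta>)" by (simp only: i pe)
  also have "\<dots> = ((\<iota> \<otimes> \<mu>) \<odot> (G \<otimes> \<iota>)) \<odot> ((\<delta> \<otimes> E \<otimes> \<iota>) \<odot> \<delta>)" by (simp add: K1 cmpA)
  also have "\<dots> = (\<mu> \<otimes> Y) \<odot> (((\<iota> \<otimes> sy 1 2 \<otimes> \<iota>) \<odot> (\<delta> \<otimes> E \<otimes> \<iota>)) \<odot> \<delta>)" by (simp add: K2 cmpA)
  also have "\<dots> = (\<mu> \<otimes> Y) \<odot> (\<iota> \<otimes> E \<otimes> \<iota> \<otimes> \<iota>) \<odot> ((\<delta> \<otimes> \<iota>) \<odot> \<delta>)" by (simp add: K3 cmpA)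
  also have "\<dots> = (\<mu> \<otimes> Y) \<odot> (\<iota> \<otimes> E \<otimes> \<iota> \<otimes> \<iota>) \<odot> (\<iota> \<otimes> \<delta>) \<odot> \<delta>" by (simp add: dA)
  also have "\<dots> = Df" by (rule K5)
  finally show ?thesis .
qed

end



context ihopf begin

lemma DM: "Df \<odot> \<mu> = (\<iota> \<otimes> (\<mu> \<odot> (\<iota> \<otimes> \<mu>))) \<odot> (P \<otimes> \<iota> \<otimes> \<iota>)"
proof -
  have b: "(P \<otimes> \<iota>) \<odot> \<mu> = (\<iota> \<otimes> \<iota> \<otimes> \<mu>) \<odot> (P \<otimes> \<iota> \<otimes> \<iota>)"
    using sp1[of P \<mu>] sp2[of P \<mu>] by (simp add: tmU1 idn2 tmA)
  have c: "(\<iota> \<otimes> \<mu>) \<odot> (\<iota> \<otimes> \<iota> \<otimes> \<mu>) = \<iota> \<otimes> (\<mu> \<odot> (\<iota> \<otimes> \<mu>))" by (simp add: NR)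
  have "Df \<odot> \<mu> = (\<iota> \<otimes> \<mu>) \<odot> ((P \<otimes> \<iota>) \<odot> \<mu>)" by (simp add: F2'[symmetric] cmpA)
  also have "\<dots> = ((\<iota> \<otimes> \<mu>) \<odot> (\<iota> \<otimes> \<iota> \<otimes> \<mu>)) \<odot> (P \<otimes> \<iota> \<otimes> \<iota>)" by (simp add: b cmpA del: idn2)
  also have "\<dots> = (\<iota> \<otimes> (\<mu> \<odot> (\<iota> \<otimes> \<mu>))) \<odot> (P \<otimes> \<iota> \<otimes> \<iota>)" by (simp only: c)
  finally show ?thesis .
qed

lemma DM': "Df \<odot> \<mu> = ((\<mu> \<odot> (\<mu> \<otimes> \<iota>)) \<otimes> \<iota>) \<odot> (\<iota> \<otimes> \<iota> \<otimes> P)"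
proof -
  have b: "(\<iota> \<otimes> P) \<odot> \<mu> = (\<mu> \<otimes> \<iota> \<otimes> \<iota>) \<odot> (\<iota> \<otimes> \<iota> \<otimes> P)"
    using sp1[of \<mu> P] sp2[of \<mu> P] by (simp add: tmU2 idn2 tmA)
  have c: "(\<mu> \<otimes> \<iota>) \<odot> (\<mu> \<otimes> \<iota> \<otimes> \<iota>) = (\<mu> \<odot> (\<mu> \<otimes> \<iota>)) \<otimes> \<iota>" by (simp add: NR)
  have "Df \<odot> \<mu> = (\<mu> \<otimes> \<iota>) \<odot> ((\<iota> \<otimes> P) \<odot> \<mu>)" by (simp add: Dform cmpA)
  also have "\<dots> = ((\<mu> \<otimes> \<iota>) \<odot> (\<mu> \<otimes> \<iota> \<otimes> \<iota>)) \<odot> (\<iota> \<otimes> \<iota> \<otimes> P)" by (simp add: b cmpA del: idn2)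
  also have "\<dots> = ((\<mu> \<odot> (\<mu> \<otimes> \<iota>)) \<otimes> \<iota>) \<odot> (\<iota> \<otimes> \<iota> \<otimes> P)" by (simp only: c)
  finally show ?thesis .
qed

lemma F2: "(\<iota> \<otimes> \<mu>) \<odot> (Df \<otimes> \<iota>) = Df \<odot> \<mu>"
proof -
  have a: "((\<iota> \<otimes> \<mu>) \<odot> (P \<otimes> \<iota>)) \<otimes> \<iota> = (\<iota> \<otimes> \<mu> \<otimes> \<iota>) \<odot> (P \<otimes> \<iota> \<otimes> \<iota>)"
    using xl[of "P \<otimes> \<iota>" "\<iota> \<otimes> \<mu>" 1] by (simp add: tmA)
  have c: "(\<iota> \<otimes> \<mu>) \<odot> (\<iota> \<otimes> \<mu> \<otimes> \<iota>) = \<iota> \<otimes> (\<mu> \<odot> (\<mu> \<otimes> \<iota>))" by (simp add: NR)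
  have "(\<iota> \<otimes> \<mu>) \<odot> (Df \<otimes> \<iota>) = (\<iota> \<otimes> \<mu>) \<odot> ((\<iota> \<otimes> \<mu> \<otimes> \<iota>) \<odot> (P \<otimes> \<iota> \<otimes> \<iota>))"
    by (simp only: F2'[symmetric] a)
  also have "\<dots> = (\<iota> \<otimes> (\<mu> \<odot> (\<mu> \<otimes> \<iota>))) \<odot> (P \<otimes> \<iota> \<otimes> \<iota>)"
    by (simp add: cmpA[symmetric] c del: idn2)
  also have "\<dots> = (\<iota> \<otimes> (\<mu> \<odot> (\<iota> \<otimes> \<mu>))) \<odot> (P \<otimes> \<iota> \<otimes> \<iota>)" by (simp only: mA)
  also have "\<dots> = Df \<odot> \<mu>" by (simp add: DM)
  finally show ?thesis .
qed

lemma coass: "(Df \<otimes> \<iota>) \<odot> Df = (\<iota> \<otimes> Df) \<odot> Df"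
proof -
  have "(Df \<otimes> \<iota>) \<odot> Df = ((Df \<odot> \<mu>) \<otimes> \<iota>) \<odot> (\<iota> \<otimes> P)"
    using xl[of \<mu> Df 1] by (simp add: Dform[symmetric] cmpA)
  also have "\<dots> = (((\<iota> \<otimes> (\<mu> \<odot> (\<iota> \<otimes> \<mu>))) \<odot> (P \<otimes> \<iota> \<otimes> \<iota>)) \<otimes> \<iota>) \<odot> (\<iota> \<otimes> P)" by (simp only: DM)
  also have "\<dots> = (\<iota> \<otimes> (\<mu> \<odot> (\<iota> \<otimes> \<mu>)) \<otimes> \<iota>) \<odot> ((P \<otimes> \<iota> \<otimes> \<iota> \<otimes> \<iota>) \<odot> (\<iota> \<otimes> P))"
    using xl[of "P \<otimes> \<iota> \<otimes> \<iota>" "\<iota> \<otimes> (\<mu> \<odot> (\<iota> \<otimes> \<mu>))" 1] by (simp add: tmA cmpA)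
  also have "(P \<otimes> \<iota> \<otimes> \<iota> \<otimes> \<iota>) \<odot> (\<iota> \<otimes> P) = P \<otimes> \<iota> \<otimes> P" by (simp add: NR)
  also have "(\<iota> \<otimes> (\<mu> \<odot> (\<iota> \<otimes> \<mu>)) \<otimes> \<iota>) \<odot> (P \<otimes> \<iota> \<otimes> P) = (\<iota> \<otimes> (\<mu> \<odot> (\<mu> \<otimes> \<iota>)) \<otimes> \<iota>) \<odot> (P \<otimes> \<iota> \<otimes> P)"
    by (simp only: mA)
  also have "\<dots> = (\<iota> \<otimes> (\<mu> \<odot> (\<mu> \<otimes> \<iota>)) \<otimes> \<iota>) \<odot> ((\<iota> \<otimes> \<iota> \<otimes> \<iota> \<otimes> P) \<odot> (P \<otimes> \<iota>))" by (simp add: NR)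
  also have "\<dots> = (\<iota> \<otimes> (((\<mu> \<odot> (\<mu> \<otimes> \<iota>)) \<otimes> \<iota>) \<odot> (\<iota> \<otimes> \<iota> \<otimes> P))) \<odot> (P \<otimes> \<iota>)"
    using xr[of "\<iota> \<otimes> \<iota> \<otimes> P" "(\<mu> \<odot> (\<mu> \<otimes> \<iota>)) \<otimes> \<iota>" 1] by (simp add: tmA cmpA)
  also have "\<dots> = (\<iota> \<otimes> (Df \<odot> \<mu>)) \<odot> (P \<otimes> \<iota>)" by (simp only: DM')
  also have "\<dots> = (\<iota> \<otimes> Df) \<odot> Df"
    using xr[of \<mu> Df 1] by (simp add: F2'[symmetric] cmpA)
  finally show ?thesis .
qed

lemma lP: "(lt \<otimes> \<iota>) \<odot> P = \<eta>"
proof -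
  have "(lt \<otimes> \<iota>) \<odot> P = (lt \<otimes> s) \<odot> (\<delta> \<odot> Lt)" by (simp add: P_def E_def NR)
  also have "\<dots> = s \<odot> ((lt \<otimes> \<iota>) \<odot> (\<delta> \<odot> Lt))" using zl[of lt s] by (simp add: cmpA)
  also have "\<dots> = \<eta>" by (simp add: cx[OF coint] nrm' cmpA idR Su)
  finally show ?thesis .
qed

lemma cuL: "(lt \<otimes> \<iota>) \<odot> Df = \<iota>"
proof -
  have "(lt \<otimes> \<iota>) \<odot> Df = (lt \<otimes> \<mu>) \<odot> (P \<otimes> \<iota>)" by (simp add: F2'[symmetric] NR)
  also have "\<dots> = \<mu> \<odot> ((lt \<otimes> \<iota> \<otimes> \<iota>) \<odot> (P \<otimes> \<iota>))" using zl[of lt \<mu>] by (simp add: cmpA idn2)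
  also have "\<dots> = \<iota>" by (simp add: NR lP mU1)
  finally show ?thesis .
qed

end



context ihopf begin

lemma si_eta: "si \<odot> \<eta> = \<eta>"
proof -
  have "si \<odot> \<eta> = si \<odot> (s \<odot> \<eta>)" by (simp add: Su)
  also have "\<dots> = \<eta>" by (simp add: cmpA[symmetric] sis idL)
  finally show ?thesis .
qed

lemma LS: "(\<iota> \<otimes> (lt \<odot> s)) \<odot> \<delta> = \<eta> \<odot> (lt \<odot> s)"
proof -
  have il: "(lt \<otimes> \<iota>) \<odot> \<sigma> = \<iota> \<otimes> lt" using syN[of \<iota> lt] by (simp add: sy0 idL)
  have a0: "(\<iota> \<otimes> lt) \<odot> (s \<otimes> s) = s \<otimes> (lt \<odot> s)" by (simp add: NR)
  have a: "s \<otimes> (lt \<odot> s) = (lt \<otimes> \<iota>) \<odot> (\<sigma> \<odot> (s \<otimes> s))"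
  proof -
    have "(lt \<otimes> \<iota>) \<odot> (\<sigma> \<odot> (s \<otimes> s)) = ((lt \<otimes> \<iota>) \<odot> \<sigma>) \<odot> (s \<otimes> s)" by (simp add: cmpA)
    then show ?thesis by (simp only: il a0)
  qed
  have "s \<odot> ((\<iota> \<otimes> (lt \<odot> s)) \<odot> \<delta>) = (s \<otimes> (lt \<odot> s)) \<odot> \<delta>"
    using zr[of "lt \<odot> s" s] by (simp add: cmpA)
  also have "\<dots> = (lt \<otimes> \<iota>) \<odot> (\<sigma> \<odot> ((s \<otimes> s) \<odot> \<delta>))" by (simp only: a; simp add: cmpA)
  also have "\<dots> = (lt \<otimes> \<iota>) \<odot> (\<delta> \<odot> s)" by (simp only: anticomult)
  also have "\<dots> = \<eta> \<odot> (lt \<odot> s)" by (simp add: cx[OF coint] cmpA)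
  finally have b: "s \<odot> ((\<iota> \<otimes> (lt \<odot> s)) \<odot> \<delta>) = \<eta> \<odot> (lt \<odot> s)" .
  have "(\<iota> \<otimes> (lt \<odot> s)) \<odot> \<delta> = si \<odot> (s \<odot> ((\<iota> \<otimes> (lt \<odot> s)) \<odot> \<delta>))"
    by (simp add: cmpA[symmetric] sis idL)
  also have "\<dots> = \<eta> \<odot> (lt \<odot> s)" by (simp only: b; simp add: cmpA[symmetric] si_eta)
  finally show ?thesis .
qed

definition "cc = lt \<odot> (s \<odot> Lt)"
lemma wt_cc[simp]: "wt cc" "dm cc = 0" "cd cc = 0" by (simp_all add: cc_def)

lemma Qlem: "(\<iota> \<otimes> lt) \<odot> P = \<eta> \<odot> cc"
  by (simp add: P_def E_def NR cx[OF LS] cc_def)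

lemma cR1: "(\<iota> \<otimes> lt) \<odot> Df = \<iota> \<otimes> cc"
proof -
  have "(\<iota> \<otimes> lt) \<odot> Df = (\<mu> \<otimes> lt) \<odot> (\<iota> \<otimes> P)" by (simp add: Dform NR)
  also have "\<dots> = \<mu> \<odot> ((\<iota> \<otimes> \<iota> \<otimes> lt) \<odot> (\<iota> \<otimes> P))" using zr[of lt \<mu>] by (simp add: cmpA idn2 tmA)
  also have "\<dots> = \<iota> \<otimes> cc" by (simp add: NR Qlem uR)
  finally show ?thesis .
qed

lemma cR2: "lt \<odot> ((\<iota> \<otimes> lt) \<odot> Df) = lt"
proof -
  have "lt \<odot> ((\<iota> \<otimes> lt) \<odot> Df) = lt \<odot> ((\<iota> \<otimes> (lt \<odot> \<mu>)) \<odot> (P \<otimes> \<iota>))" by (simp add: F2'[symmetric] NR)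
  also have "\<dots> = (lt \<otimes> (lt \<odot> \<mu>)) \<odot> (P \<otimes> \<iota>)" using zr[of "lt \<odot> \<mu>" lt] by (simp add: cmpA)
  also have "\<dots> = (lt \<odot> \<mu>) \<odot> ((lt \<otimes> \<iota> \<otimes> \<iota>) \<odot> (P \<otimes> \<iota>))" using zl[of lt "lt \<odot> \<mu>"] by (simp add: cmpA idn2)
  also have "\<dots> = lt" by (simp add: NR lP mU1)
  finally show ?thesis .
qed

lemma cc1: "cc = idn 0"
proof -
  have a: "(\<iota> \<otimes> cc) \<odot> Lt = Lt \<otimes> cc" using xch[of Lt \<iota> "idn 0" cc] by (simp add: idL idR tmU2)
  have b: "lt \<odot> (Lt \<otimes> cc) = (lt \<odot> Lt) \<otimes> cc" using xch[of Lt lt cc "idn 0"] by (simp add: idL idR tmU2)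
  have "cc = lt \<odot> ((\<iota> \<otimes> cc) \<odot> Lt)" by (simp only: a b nrm'; simp add: tmU1)
  also have "\<dots> = (lt \<odot> ((\<iota> \<otimes> lt) \<odot> Df)) \<odot> Lt" by (simp add: cR1 cmpA)
  also have "\<dots> = idn 0" by (simp only: cR2 nrm')
  finally show ?thesis .
qed

lemma cuR: "(\<iota> \<otimes> lt) \<odot> Df = \<iota>" by (simp add: cR1 cc1 tmU2)

end


context ihopf begin

lemma main_raw:
  assumes th: "\<theta> \<in> Hom C (Uob C) H" and th2: "Cmp C m (Tm C \<theta> \<theta>) = Cmp C u (Cmp C e L)"
  shows "frobenius_algebra_in C H m u (hopf_frobenius_coproduct C H m d S L) l
    \<and> extendable C H m u (hopf_frobenius_coproduct C H m d S L) l
    \<and> extended_structure C H m u (hopf_frobenius_coproduct C H m d S L) l (Idm C H) \<theta>"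
proof -
  define D where "D = hopf_frobenius_coproduct C H m d S L"
  have Dr: "D = mr Df" by (simp add: D_def hopf_frobenius_coproduct_def Df_def E_def)
  have Dh: "D \<in> Hom C H (Tob C H H)" using wt_Df(1) by (simp add: Dr wt_def)
  note hd' = hd
  have mh: "m \<in> Hom C (Tob C H H) H" and uh: "u \<in> Hom C (Uob C) H" and eh: "e \<in> Hom C H (Uob C)"
    using hd' by blast+
  have lh: "l \<in> Hom C H (Uob C)" using lco by (simp add: right_cointegral_def)
  have alg: "algebra_in C H m u" using hopf by (simp add: hopf_algebra_in_def)
  have r1: "Cmp C (Tm C D (Idm C H)) D = Cmp C (Tm C (Idm C H) D) D" using arg_cong[OF coass, of mr] by (simp add: Dr)
  have r2: "Cmp C (Tm C l (Idm C H)) D = Idm C H" using arg_cong[OF cuL, of mr] by (simp add: Dr)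
  have r3: "Cmp C (Tm C (Idm C H) l) D = Idm C H" using arg_cong[OF cuR, of mr] by (simp add: Dr)
  have r4: "Cmp C (Tm C m (Idm C H)) (Tm C (Idm C H) D) = Cmp C D m" using arg_cong[OF F1, of mr] by (simp add: Dr)
  have r5: "Cmp C (Tm C (Idm C H) m) (Tm C D (Idm C H)) = Cmp C D m" using arg_cong[OF F2, of mr] by (simp add: Dr)
  have r6: "Cmp C m (Cmp C D u) = Cmp C u (Cmp C e L)" using arg_cong[OF ext3, of mr] by (simp add: Dr)
  have frob: "frobenius_algebra_in C H m u D l"
    unfolding frobenius_algebra_in_def coalgebra_in_def using alg H Dh lh r1 r2 r3 r4 r5 by blast
  have iH: "Idm C H \<in> Hom C H H" using H by (rule id_hom)
  have tii: "Tm C (Idm C H) (Idm C H) = Idm C (Tob C H H)" using H by (simp add: tm_id)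
  have tth: "Tm C \<theta> (Idm C H) \<in> Hom C H (Tob C H H)" using tm_hom[OF th iH] H by (simp add: tob_unitl)
  have mth: "Cmp C m (Tm C \<theta> (Idm C H)) \<in> Hom C H H" using cmp_hom[OF tth mh] .
  have Du: "Cmp C D u \<in> Hom C (Uob C) (Tob C H H)" using cmp_hom[OF uh Dh] .
  have ext: "extended_structure C H m u D l (Idm C H) \<theta>"
    unfolding extended_structure_def frobenius_morphism_in_def
    using iH th tii id_l[OF mh] id_r[OF mh] id_l[OF uh] id_l[OF Dh] id_r[OF Dh] id_r[OF lh] id_l[OF iH]
      id_l[OF mth] id_l[OF Du] r6 th2
    by simp
  show ?thesis using frob ext unfolding D_def[symmetric] extendable_def by blast
qed

end

theorem mainTheorem16:
  fixes C :: "('o, 'm) smcat"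
  assumes "strict_symmetric_monoidal_cat C"
    and "integral_hopf_algebra_in C H m u d e S Sinv \<Lambda> lam"
    and "\<theta> \<in> Hom C (Uob C) H"
    and "Cmp C m (Tm C \<theta> \<theta>) = Cmp C u (Cmp C e \<Lambda>)"
  shows "frobenius_algebra_in C H m u (hopf_frobenius_coproduct C H m d S \<Lambda>) lam
    \<and> extendable C H m u (hopf_frobenius_coproduct C H m d S \<Lambda>) lam
    \<and> extended_structure C H m u (hopf_frobenius_coproduct C H m d S \<Lambda>) lam (Idm C H) \<theta>"
proof -
  have I: "ihopf C H m u d e S Sinv \<Lambda> lam"
    using assms(1,2)
    unfolding ihopf_def ihopf_axioms_def hopfH_def hopfH_axioms_def smcH_def smcH_axioms_def smc_def
      integral_hopf_algebra_in_def hopf_algebra_in_def algebra_in_def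
    by blast
  show ?thesis by (rule ihopf.main_raw[OF I assms(3,4)])
qed


end
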